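(* Let $d\ge1$, $p>1$ and $s\in(0,1)$ with $sp<d$, let $p<q<\frac{p(d-s)}{d-sp}$, and set $r=p\frac{q-1}{p-1}$ and \[ a=\frac{d(q-p)}{(q-1)\big(dp-(d-sp)q\big)}, \] where $\delta:=dp-(d-sp)q>0$. Then there is an optimal (i.e. smallest) constant $\mathscr{L}\in(0,\infty)$ such that for every $u\in\mathcal{D}^{p,q}_s$, \[ \|u\|_{L^r(\mathbb{R}^d)}\le\mathscr{L}\,[u]_{W^{s,p}(\mathbb{R}^d)}^a\,\|u\|_{L^q(\mathbb{R}^d)}^{1-a}. \]
   Context: $[u]_{W^{s,p}(\mathbb{R}^d)}^p=\int_{\mathbb{R}^d}\int_{\mathbb{R}^d}\frac{|u(x)-u(y)|^p}{|x-y|^{d+sp}}dx\,dy$; $W^{s,p}(\mathbb{R}^d)$ is the completion of $C_c^\infty(\mathbb{R}^d)$ under $(\|u\|_{L^p}^p+[u]_{W^{s,p}}^p)^{1/p}$; and $\mathcal{D}^{p,q}_s=(W^{s,p}(\mathbb{R}^d)\cap L^q(\mathbb{R}^d))\setminus\{0\}$. *)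

theory Defs
  imports "HOL-Analysis.Analysis"
begin

fun Ck_fun :: "nat \<Rightarrow> ('a::euclidean_space \<Rightarrow> real) \<Rightarrow> bool" where
  "Ck_fun 0 f = continuous_on UNIV f"
| "Ck_fun (Suc k) f = ((\<forall>x. f differentiable (at x)) \<and>
      (\<forall>v. Ck_fun k (\<lambda>x. frechet_derivative f (at x) v)))"

definition smooth_fun :: "('a::euclidean_space \<Rightarrow> real) \<Rightarrow> bool" where
  "smooth_fun f \<longleftrightarrow> (\<forall>k. Ck_fun k f)"

definition Cc_infty :: "('a::euclidean_space \<Rightarrow> real) set" where
  "Cc_infty = {f. smooth_fun f \<and> compact (closure {x. f x \<noteq> 0})}"

definition Lp_pow :: "real \<Rightarrow> ('a::euclidean_space \<Rightarrow> real) \<Rightarrow> ennreal" where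
  "Lp_pow p u = (\<integral>\<^sup>+ x. ennreal (\<bar>u x\<bar> powr p) \<partial>lborel)"

definition Lp_norm :: "real \<Rightarrow> ('a::euclidean_space \<Rightarrow> real) \<Rightarrow> real" where
  "Lp_norm p u = enn2real (Lp_pow p u) powr (1 / p)"

definition gagliardo_pow :: "real \<Rightarrow> real \<Rightarrow> ('a::euclidean_space \<Rightarrow> real) \<Rightarrow> ennreal" where
  "gagliardo_pow s p u = (\<integral>\<^sup>+ x. \<integral>\<^sup>+ y.
      ennreal (\<bar>u x - u y\<bar> powr p / norm (x - y) powr (real DIM('a) + s * p)) \<partial>lborel \<partial>lborel)"

definition gagliardo :: "real \<Rightarrow> real \<Rightarrow> ('a::euclidean_space \<Rightarrow> real) \<Rightarrow> real" where
  "gagliardo s p u = enn2real (gagliardo_pow s p u) powr (1 / p)"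

text \<open>W^{s,p}(R^d): completion of C_c^infinity under (||u||_p^p + [u]^p)^(1/p), realised
  concretely as the measurable functions of finite norm that are norm-limits of C_c^infinity functions.\<close>
definition Wsp :: "real \<Rightarrow> real \<Rightarrow> ('a::euclidean_space \<Rightarrow> real) set" where
  "Wsp s p = {u. u \<in> borel_measurable lborel \<and> Lp_pow p u < \<infinity> \<and> gagliardo_pow s p u < \<infinity> \<and>
     (\<exists>\<phi>::nat \<Rightarrow> 'a \<Rightarrow> real. (\<forall>n. \<phi> n \<in> Cc_infty) \<and>
        ((\<lambda>n. Lp_pow p (\<lambda>x. \<phi> n x - u x) + gagliardo_pow s p (\<lambda>x. \<phi> n x - u x)) \<longlonglongrightarrow> 0))}"

definition Dpqs :: "real \<Rightarrow> real \<Rightarrow> real \<Rightarrow> ('a::euclidean_space \<Rightarrow> real) set" where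
  "Dpqs p q s = {u. u \<in> Wsp s p \<and> Lp_pow q u < \<infinity> \<and> \<not> (AE x in lborel. u x = 0)}"

end

theory Submission
  imports Defs "HOL-Computational_Algebra.Polynomial" "HOL-Real_Asymp.Real_Asymp"
begin


lemma poly_exp_lim:
  "((\<lambda>x::real. x ^ k * poly P x * exp (-x)) \<longlongrightarrow> 0) at_top"
proof (induction P arbitrary: k)
  case (pCons a P)
  have e: "(\<lambda>x::real. x ^ k * poly (pCons a P) x * exp (-x)) =
      (\<lambda>x. a * (x ^ k * exp (-x)) + x ^ Suc k * poly P x * exp (-x))"
    by (auto simp: algebra_simps)
  have l1: "((\<lambda>x::real. x ^ k * exp (-x)) \<longlongrightarrow> 0) at_top" by real_asymp
  show ?case unfolding e using tendsto_add[OF tendsto_mult_right_zero[OF l1] pCons.IH[of "Suc k"]] by simp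
qed simp

definition bq :: "real poly \<Rightarrow> real \<Rightarrow> real" where
  "bq P t = (if t > 0 then poly P (1/t) * exp (-1/t) else 0)"

definition dq :: "real poly \<Rightarrow> real poly" where
  "dq P = [:0,0,1:] * (P - pderiv P)"

lemma bq_pos_deriv:
  assumes "t > 0"
  shows "((\<lambda>t. poly P (1/t) * exp (-1/t)) has_real_derivative poly (dq P) (1/t) * exp (-1/t)) (at t)"
proof -
  have "((\<lambda>t. poly P (1/t) * exp (-1/t)) has_real_derivative
     (poly (pderiv P) (1/t) * (- 1 / t^2)) * exp (-1/t) + poly P (1/t) * (exp (-1/t) * (1/t^2))) (at t)"
    using assms
    by (auto intro!: derivative_eq_intros DERIV_chain2[OF poly_DERIV] simp: power2_eq_square)
  moreover have "(poly (pderiv P) (1/t) * (- 1 / t^2)) * exp (-1/t) + poly P (1/t) * (exp (-1/t) * (1/t^2))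
      = poly (dq P) (1/t) * exp (-1/t)"
    by (simp add: dq_def algebra_simps power2_eq_square field_simps)
  ultimately show ?thesis by simp
qed

lemma bq_deriv: "(bq P has_real_derivative bq (dq P) t) (at t)"
proof (cases "t > 0")
  case True
  have "((\<lambda>t. poly P (1/t) * exp (-1/t)) has_real_derivative bq (dq P) t) (at t)"
    using bq_pos_deriv[OF True] True by (simp add: bq_def)
  then show ?thesis
    by (rule has_field_derivative_transform_within_open[where S="{0<..}"]) (use True in \<open>auto simp: bq_def\<close>)
next
  case False
  show ?thesis
  proof (cases "t < 0")
    case True
    have "((\<lambda>_. 0) has_real_derivative bq (dq P) t) (at t)"
      using True by (simp add: bq_def)
    then show ?thesis
      by (rule has_field_derivative_transform_within_open[where S="{..<0}"]) (use True in \<open>auto simp: bq_def\<close>)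
  next
    case False
    with \<open>\<not> t > 0\<close> have t0: "t = 0" by simp
    have r: "((\<lambda>h. (bq P (0 + h) - bq P 0) / h) \<longlongrightarrow> 0) (at_right 0)"
    proof -
      have "((\<lambda>x::real. x ^ 1 * poly P x * exp (-x)) \<longlongrightarrow> 0) at_top" by (rule poly_exp_lim)
      then have "((\<lambda>h::real. (inverse h) ^ 1 * poly P (inverse h) * exp (- inverse h)) \<longlongrightarrow> 0) (at_right 0)"
        by (simp add: filterlim_at_top_to_right)
      then show ?thesis
        apply (rule Lim_transform_eventually)
        by (auto simp: eventually_at_right_less bq_def divide_inverse algebra_simps intro!: eventually_mono[OF eventually_at_right_less])
    qed
    have l: "((\<lambda>h. (bq P (0 + h) - bq P 0) / h) \<longlongrightarrow> 0) (at_left 0)"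
    proof -
      have "eventually (\<lambda>h. (bq P (0 + h) - bq P 0) / h = 0) (at_left (0::real))"
        by (rule eventually_mono[OF eventually_at_left_real[of "-1::real" 0]]) (auto simp: bq_def)
      then show ?thesis by (rule tendsto_eventually)
    qed
    have "((\<lambda>h. (bq P (0 + h) - bq P 0) / h) \<longlongrightarrow> 0) (at 0)"
      using r l by (simp add: filterlim_split_at_real)
    then show ?thesis using t0 by (simp add: DERIV_def bq_def)
  qed
qed



inductive SM :: "('a::euclidean_space \<Rightarrow> real) \<Rightarrow> bool" where
  SM_const: "SM (\<lambda>x. c)"
| SM_lin: "SM (\<lambda>x. inner x w)"
| SM_add: "SM f \<Longrightarrow> SM g \<Longrightarrow> SM (\<lambda>x. f x + g x)"
| SM_mult: "SM f \<Longrightarrow> SM g \<Longrightarrow> SM (\<lambda>x. f x * g x)"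
| SM_bq: "SM f \<Longrightarrow> SM (\<lambda>x. bq P (f x))"

lemma SM_deriv:
  assumes "SM f"
  shows "\<exists>D. (\<forall>x. (f has_derivative D x) (at x)) \<and> (\<forall>v. SM (\<lambda>x. D x v))"
  using assms
proof induction
  case (SM_const c)
  then show ?case by (intro exI[of _ "\<lambda>x v. 0"]) (auto intro: SM.intros)
next
  case (SM_lin w)
  then show ?case
    by (intro exI[of _ "\<lambda>x v. inner v w"]) (auto intro!: SM.intros derivative_eq_intros)
next
  case (SM_add f g)
  then obtain Df Dg where f: "\<forall>x. (f has_derivative Df x) (at x)" "\<forall>v. SM (\<lambda>x. Df x v)"
    and g: "\<forall>x. (g has_derivative Dg x) (at x)" "\<forall>v. SM (\<lambda>x. Dg x v)" by blast
  show ?case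
    by (intro exI[of _ "\<lambda>x v. Df x v + Dg x v"]) (use f g in \<open>auto intro!: SM.intros has_derivative_add\<close>)
next
  case (SM_mult f g)
  then obtain Df Dg where f: "\<forall>x. (f has_derivative Df x) (at x)" "\<forall>v. SM (\<lambda>x. Df x v)"
    and g: "\<forall>x. (g has_derivative Dg x) (at x)" "\<forall>v. SM (\<lambda>x. Dg x v)" by blast
  show ?case
    by (intro exI[of _ "\<lambda>x v. f x * Dg x v + Df x v * g x"])
       (use f g SM_mult.hyps in \<open>auto intro!: SM.intros has_derivative_mult\<close>)
next
  case (SM_bq f P)
  then obtain Df where f: "\<forall>x. (f has_derivative Df x) (at x)" "\<forall>v. SM (\<lambda>x. Df x v)" by blast
  have "((\<lambda>x. bq P (f x)) has_derivative (\<lambda>v. bq (dq P) (f x) * Df x v)) (at x)" for x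
  proof -
    have "(bq P has_derivative (\<lambda>h. bq (dq P) (f x) * h)) (at (f x))"
      using bq_deriv[of P "f x"] by (simp add: has_field_derivative_def)
    from has_derivative_compose[OF f(1)[rule_format, of x] this] show ?thesis
      by (simp add: o_def)
  qed
  then show ?case
    by (intro exI[of _ "\<lambda>x v. bq (dq P) (f x) * Df x v"])
       (use f SM_bq.hyps in \<open>auto intro!: SM.intros\<close>)
qed

lemma SM_Ck: "SM f \<Longrightarrow> Ck_fun k f"
proof (induction k arbitrary: f)
  case 0
  then obtain D where "\<forall>x. (f has_derivative D x) (at x)" using SM_deriv by blast
  then show ?case
    by (auto intro!: has_derivative_continuous continuous_at_imp_continuous_on)
next
  case (Suc k)
  then obtain D where D: "\<forall>x. (f has_derivative D x) (at x)" "\<forall>v. SM (\<lambda>x. D x v)" using SM_deriv by blast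
  have fd: "frechet_derivative f (at x) = D x" for x
    using D(1) frechet_derivative_at by metis
  show ?case using D Suc.IH by (auto simp: fd differentiable_def)
qed

definition bump :: "'a::euclidean_space \<Rightarrow> real" where
  "bump x = bq 1 (1 - inner x x)"

lemma SM_bump: "SM bump"
proof -
  have "SM (\<lambda>x::'a. inner x x)"
  proof -
    have "SM (\<lambda>x::'a. \<Sum>b\<in>Basis. inner x b * inner x b)"
    proof (induction rule: finite_induct[OF finite_Basis[where 'a='a], where P="\<lambda>B. SM (\<lambda>x::'a. \<Sum>b\<in>B. inner x b * inner x b)"])
      case 1 then show ?case using SM_const[of 0] by simp
    next
      case (2 b B)
      then show ?case by (auto intro!: SM.intros)
    qed
    then show ?thesis by (simp add: euclidean_inner[symmetric])
  qed
  then have "SM (\<lambda>x::'a. 1 + (-1) * inner x x)"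
    by (intro SM.intros)
  then have "SM (\<lambda>x::'a. bq 1 (1 + (-1) * inner x x))" by (rule SM.intros)
  then show ?thesis unfolding bump_def by simp
qed

lemma bump_smooth: "bump \<in> Cc_infty"
proof -
  have s: "smooth_fun bump" using SM_bump SM_Ck by (auto simp: smooth_fun_def)
  have sub: "{x::'a. bump x \<noteq> 0} \<subseteq> cball 0 1"
  proof
    fix x :: 'a assume "x \<in> {x. bump x \<noteq> 0}"
    then have "norm x * norm x < 1" by (auto simp: bump_def bq_def dot_square_norm power2_eq_square split: if_splits)
    then have "norm x \<le> 1" by (metis abs_norm_cancel abs_square_less_1 less_imp_le power2_eq_square)
    then show "x \<in> cball 0 1" by simp
  qed
  have "closure {x::'a. bump x \<noteq> 0} \<subseteq> cball 0 1"
    using closure_minimal[OF sub] by simp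
  then have "compact (closure {x::'a. bump x \<noteq> 0})"
    using compact_cball closed_closure compact_Int_closed by (metis inf.absorb_iff2)
  with s show ?thesis by (simp add: Cc_infty_def)
qed



lemma bump_cont: "continuous_on UNIV (bump :: 'a::euclidean_space \<Rightarrow> real)"
  using SM_Ck[OF SM_bump, of 0] by simp

lemma bump_meas[measurable]: "(bump :: 'a::euclidean_space \<Rightarrow> real) \<in> borel_measurable borel"
  using bump_cont by (rule borel_measurable_continuous_onI)

lemma bump_zero: "norm x \<ge> 1 \<Longrightarrow> bump x = 0"
proof -
  assume "norm x \<ge> 1"
  then have "norm x * norm x \<ge> 1 * 1" by (intro mult_mono) auto
  then show ?thesis by (auto simp: bump_def bq_def dot_square_norm power2_eq_square)
qed

lemma bump_pos: "norm x < 1 \<Longrightarrow> bump x > 0"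
proof -
  assume "norm x < 1"
  then have "norm x * norm x < 1" by (metis abs_norm_cancel abs_square_less_1 power2_eq_square)
  then show ?thesis by (auto simp: bump_def bq_def dot_square_norm power2_eq_square)
qed

lemma bump_bound: "\<bar>bump x\<bar> \<le> 1"
proof (cases "1 - inner x x > 0")
  case True
  then have "bump x = exp (-1 / (1 - inner x x))" by (simp add: bump_def bq_def)
  moreover have "-1 / (1 - inner x x) \<le> 0" using True by simp
  ultimately show ?thesis by simp
qed (simp add: bump_def bq_def)

lemma bump_lipschitz:
  obtains Lc where "Lc \<ge> 0" "\<And>x y::'a::euclidean_space. norm (x - y) \<le> 1 \<Longrightarrow> \<bar>bump x - bump y\<bar> \<le> Lc * norm (x - y)"
proof -
  have cont: "continuous_on {0..1} (bq (dq 1))"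
    using bq_deriv by (meson DERIV_isCont continuous_at_imp_continuous_on)
  have "bounded (bq (dq 1) ` {0..1})"
    by (intro compact_imp_bounded compact_continuous_image cont) auto
  then obtain B0 where B0: "\<And>t. t \<in> {0..1} \<Longrightarrow> \<bar>bq (dq 1) t\<bar> \<le> B0"
    unfolding bounded_iff by (metis atLeastAtMost_iff image_eqI real_norm_def)
  define B where "B = max B0 0"
  have B: "\<bar>bq (dq 1) t\<bar> \<le> B" if "t \<le> 1" for t
    using B0[of t] that by (cases "t \<ge> 0") (auto simp: B_def bq_def)
  have lip1: "\<bar>bq 1 t1 - bq 1 t2\<bar> \<le> B * \<bar>t1 - t2\<bar>" if "t1 \<le> 1" "t2 \<le> 1" for t1 t2
    using field_differentiable_bound[of "{..1}" "bq 1" "bq (dq 1)" B t1 t2] that B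
      bq_deriv by (auto intro: has_field_derivative_at_within)
  show ?thesis
  proof (rule that[of "3 * B"])
    show "3 * B \<ge> 0" by (simp add: B_def)
    fix x y :: 'a assume xy: "norm (x - y) \<le> 1"
    show "\<bar>bump x - bump y\<bar> \<le> 3 * B * norm (x - y)"
    proof (cases "norm x \<ge> 1 \<and> norm y \<ge> 1")
      case True
      then show ?thesis using bump_zero[of x] bump_zero[of y] by (simp add: B_def)
    next
      case False
      have "norm x \<le> norm y + norm (x - y)" by (metis norm_triangle_sub add.commute)
      moreover have "norm y \<le> norm x + norm (x - y)" by (metis norm_triangle_sub norm_minus_commute add.commute)
      ultimately have s3: "norm x + norm y \<le> 3" using False xy by auto
      have "\<bar>inner x x - inner y y\<bar> = \<bar>inner (x - y) (x + y)\<bar>"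
        by (simp add: inner_diff_left inner_diff_right inner_add_right inner_add_left inner_commute)
      also have "\<dots> \<le> norm (x - y) * norm (x + y)" by (rule Cauchy_Schwarz_ineq2)
      also have "\<dots> \<le> norm (x - y) * 3"
        using s3 norm_triangle_ineq[of x y] by (intro mult_left_mono) auto
      finally have i: "\<bar>inner x x - inner y y\<bar> \<le> 3 * norm (x - y)" by simp
      have "\<bar>bump x - bump y\<bar> \<le> B * \<bar>(1 - inner x x) - (1 - inner y y)\<bar>"
        unfolding bump_def by (rule lip1) auto
      also have "\<dots> \<le> B * (3 * norm (x - y))"
        using i by (intro mult_left_mono) (auto simp: B_def)
      finally show ?thesis by simp
    qed
  qed
qed

lemma bump_Lp_finite:
  assumes "t > 0"
  shows "Lp_pow t (bump :: 'a::euclidean_space \<Rightarrow> real) < \<infinity>"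
proof -
  have "Lp_pow t (bump :: 'a \<Rightarrow> real) \<le> (\<integral>\<^sup>+ x. indicator (cball (0::'a) 1) x \<partial>lborel)"
    unfolding Lp_pow_def
  proof (intro nn_integral_mono)
    fix x :: 'a
    show "ennreal (\<bar>bump x\<bar> powr t) \<le> indicator (cball 0 1) x"
    proof (cases "norm x \<le> 1")
      case True
      then have "\<bar>bump x\<bar> powr t \<le> 1" using bump_bound[of x] assms
        by (intro powr_le1) auto
      then show ?thesis using True by (simp add: indicator_def)
    next
      case False then show ?thesis using bump_zero[of x] by (simp add: indicator_def)
    qed
  qed
  also have "\<dots> < \<infinity>" using emeasure_lborel_cball_finite by simp
  finally show ?thesis .
qed

lemma bump_not_AE0: "\<not> (AE x in lborel. (bump :: 'a::euclidean_space \<Rightarrow> real) x = 0)"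
proof
  assume "AE x in lborel. (bump :: 'a \<Rightarrow> real) x = 0"
  then have "AE x in lborel. (x::'a) \<notin> ball 0 1"
    by eventually_elim (use bump_pos in force)
  then have "emeasure lborel (ball (0::'a) 1) = 0"
    by (subst (asm) AE_iff_measurable[where N="ball 0 1"]) auto
  then show False using unit_ball_vol_pos[of "real DIM('a)"] by (simp add: emeasure_ball)
qed



lemma nn_integral_reflect:
  assumes [measurable]: "f \<in> borel_measurable borel"
  shows "(\<integral>\<^sup>+t. f (- t) \<partial>lborel) = (\<integral>\<^sup>+t. f t \<partial>(lborel::real measure))"
  using nn_integral_real_affine[OF assms, of "-1" 0] by simp

lemma int_pow_01:
  assumes "c < 1"
  shows "(\<integral>\<^sup>+t. ennreal (t powr (-c)) * indicator {0..1} t \<partial>lborel) < \<infinity>"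
proof -
  have "((\<lambda>t. t powr (-c)) has_integral (1 powr (-c+1) / (-c+1))) {0..1::real}"
    using assms by (intro has_integral_powr_from_0) auto
  from nn_integral_has_integral_lebesgue'[OF _ this] show ?thesis by simp
qed

lemma int_pow_1inf:
  assumes "c > 1"
  shows "(\<integral>\<^sup>+t. ennreal (t powr (-c)) * indicator {1..} t \<partial>lborel) < \<infinity>"
proof -
  have "((\<lambda>t. t powr (-c)) has_integral (-(1 powr (-c+1)) / (-c+1))) {1::real..}"
    using assms by (intro has_integral_powr_to_inf) auto
  from nn_integral_has_integral_lebesgue'[OF _ this] show ?thesis by simp
qed

definition w1 :: "real \<Rightarrow> real \<Rightarrow> real \<Rightarrow> ennreal" where
  "w1 c1 c2 t = (if t = 0 then \<infinity> else if \<bar>t\<bar> \<le> 1 then ennreal (\<bar>t\<bar> powr (-c1)) else ennreal (\<bar>t\<bar> powr (-c2)))"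

lemma w1_meas[measurable]: "w1 c1 c2 \<in> borel_measurable borel"
  unfolding w1_def by measurable

lemma w1_int:
  assumes "c1 < 1" "c2 > 1"
  shows "(\<integral>\<^sup>+t. w1 c1 c2 t \<partial>lborel) < \<infinity>"
proof -
  define f1 where "f1 t = ennreal (t powr (-c1)) * indicator {0..1} t" for t :: real
  define f2 where "f2 t = ennreal (t powr (-c2)) * indicator {1..} t" for t :: real
  have [measurable]: "f1 \<in> borel_measurable borel" "f2 \<in> borel_measurable borel"
    unfolding f1_def f2_def by measurable
  have "(\<integral>\<^sup>+t. w1 c1 c2 t \<partial>lborel) \<le> (\<integral>\<^sup>+t. (f1 t + f1 (-t)) + (f2 t + f2 (-t)) \<partial>lborel)"
  proof (rule nn_integral_mono_AE)
    show "AE t in lborel. w1 c1 c2 t \<le> f1 t + f1 (- t) + (f2 t + f2 (- t))"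
      using AE_lborel_singleton[of 0]
    proof eventually_elim
      case (elim t)
      show ?case
      proof (cases "\<bar>t\<bar> \<le> 1")
        case True
        then have "w1 c1 c2 t \<le> f1 t + f1 (-t)"
          using elim by (cases "t \<ge> 0") (auto simp: w1_def f1_def)
        then show ?thesis by (rule order_trans) (rule add_increasing2, auto)
      next
        case False
        then have "w1 c1 c2 t \<le> f2 t + f2 (-t)"
          using elim by (cases "t \<ge> 0") (auto simp: w1_def f2_def)
        then show ?thesis by (rule order_trans) (rule add_increasing, auto)
      qed
    qed
  qed
  also have "\<dots> = ((\<integral>\<^sup>+t. f1 t \<partial>lborel) + (\<integral>\<^sup>+t. f1 (-t) \<partial>lborel)) + ((\<integral>\<^sup>+t. f2 t \<partial>lborel) + (\<integral>\<^sup>+t. f2 (-t) \<partial>lborel))"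
    by (simp add: nn_integral_add)
  also have "\<dots> = 2 * (\<integral>\<^sup>+t. f1 t \<partial>lborel) + 2 * (\<integral>\<^sup>+t. f2 t \<partial>lborel)"
    by (simp add: nn_integral_reflect mult_2)
  also have "\<dots> < \<infinity>"
    using int_pow_01[OF assms(1)] int_pow_1inf[OF assms(2)]
    by (simp add: f1_def f2_def ennreal_mult_less_top)
  finally show ?thesis .
qed



definition kn :: "real \<Rightarrow> real \<Rightarrow> real \<Rightarrow> real" where
  "kn \<gamma> \<beta> \<rho> = (if \<rho> \<le> 1 then \<rho> powr (-\<gamma>) else \<rho> powr (-\<beta>))"

lemma kn_nonneg: "kn \<gamma> \<beta> \<rho> \<ge> 0" by (simp add: kn_def)

lemma kn_meas[measurable]: "kn \<gamma> \<beta> \<in> borel_measurable borel"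
  unfolding kn_def by measurable

lemma kn_le_prod:
  fixes h :: "'a::euclidean_space"
  assumes g0: "0 \<le> \<gamma>" and b0: "0 \<le> \<beta>"
  shows "ennreal (kn \<gamma> \<beta> (norm h)) \<le> (\<Prod>b\<in>Basis. w1 (\<gamma> / DIM('a)) (\<beta> / DIM('a)) (h \<bullet> b))"
proof (cases "\<exists>b\<in>Basis. h \<bullet> b = 0")
  case True
  have nz: "w1 c1 c2 t \<noteq> 0" for c1 c2 t
    by (auto simp: w1_def)
  have "\<exists>b\<in>Basis. w1 (\<gamma> / DIM('a)) (\<beta> / DIM('a)) (h \<bullet> b) = top"
    using True by (auto simp: w1_def)
  then have "(\<Prod>b\<in>Basis. w1 (\<gamma> / DIM('a)) (\<beta> / DIM('a)) (h \<bullet> b)) = top"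
    by (simp add: ennreal_prod_eq_top nz)
  then show ?thesis by simp
next
  case False
  define c1 where "c1 = \<gamma> / DIM('a)"
  define c2 where "c2 = \<beta> / DIM('a)"
  define wr where "wr t = (if \<bar>t\<bar> \<le> 1 then \<bar>t\<bar> powr (-c1) else \<bar>t\<bar> powr (-c2))" for t :: real
  have c1: "c1 \<ge> 0" using g0 by (simp add: c1_def)
  have w: "w1 c1 c2 (h \<bullet> b) = ennreal (wr (h \<bullet> b))" if "b \<in> Basis" for b
    using False that by (auto simp: w1_def wr_def)
  have prodeq: "(\<Prod>b\<in>Basis. w1 c1 c2 (h \<bullet> b)) = ennreal (\<Prod>b\<in>Basis. wr (h \<bullet> b))"
    by (simp add: w wr_def prod_ennreal)
  have hnz: "h \<noteq> 0" using False by (metis SOME_Basis inner_zero_left)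
  then have nh: "norm h > 0" by simp
  have coord: "\<bar>h \<bullet> b\<bar> \<le> norm h" if "b \<in> Basis" for b using that by (rule Basis_le_norm)
  have cpos: "\<bar>h \<bullet> b\<bar> > 0" if "b \<in> Basis" for b using False that by auto
  have powd: "(norm h powr (-c)) ^ DIM('a) = norm h powr (- (c * DIM('a)))" for c
    using hnz by (simp add: powr_power algebra_simps)
  show ?thesis
  proof (cases "norm h \<le> 1")
    case True
    have "kn \<gamma> \<beta> (norm h) = (\<Prod>b\<in>(Basis::'a set). norm h powr (-c1))"
      using True by (simp add: kn_def powd c1_def)
    also have "\<dots> \<le> (\<Prod>b\<in>Basis. wr (h \<bullet> b))"
    proof (rule prod_mono)
      fix b :: 'a assume b: "b \<in> Basis"
      have "norm h powr (-c1) \<le> \<bar>h \<bullet> b\<bar> powr (-c1)"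
        using c1 cpos[OF b] coord[OF b] by (intro powr_mono2') auto
      then show "0 \<le> norm h powr (-c1) \<and> norm h powr (-c1) \<le> wr (h \<bullet> b)"
        using coord[OF b] True by (auto simp: wr_def)
    qed
    finally show ?thesis unfolding c1_def c2_def prodeq[unfolded c1_def c2_def] by (rule ennreal_leI)
  next
    case False
    have "kn \<gamma> \<beta> (norm h) = (\<Prod>b\<in>(Basis::'a set). norm h powr (-c2))"
      using False by (simp add: kn_def powd c2_def)
    also have "\<dots> \<le> (\<Prod>b\<in>Basis. wr (h \<bullet> b))"
    proof (rule prod_mono)
      fix b :: 'a assume b: "b \<in> Basis"
      have "norm h powr (-c2) \<le> wr (h \<bullet> b)"
      proof (cases "\<bar>h \<bullet> b\<bar> \<le> 1")
        case True
        have "\<bar>h \<bullet> b\<bar> powr c1 \<le> 1" using True c1 by (intro powr_le1) auto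
        moreover have "\<bar>h \<bullet> b\<bar> powr c1 > 0" using cpos[OF b] by simp
        ultimately have "1 \<le> \<bar>h \<bullet> b\<bar> powr (-c1)" by (simp add: powr_minus field_simps)
        moreover have "norm h powr (-c2) \<le> 1"
        proof -
          have "c2 \<ge> 0" using b0 by (simp add: c2_def)
          then have "1 \<le> norm h powr c2" using False by (intro ge_one_powr_ge_zero) auto
          then show ?thesis by (simp add: powr_minus inverse_le_1_iff)
        qed
        ultimately show ?thesis using True by (simp add: wr_def)
      next
        case F2: False
        have "c2 \<ge> 0" using b0 by (simp add: c2_def)
        then have "norm h powr (-c2) \<le> \<bar>h \<bullet> b\<bar> powr (-c2)"
          using cpos[OF b] coord[OF b] by (intro powr_mono2') auto
        then show ?thesis using F2 by (simp add: wr_def)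
      qed
      then show "0 \<le> norm h powr (-c2) \<and> norm h powr (-c2) \<le> wr (h \<bullet> b)" by simp
    qed
    finally show ?thesis unfolding c1_def c2_def prodeq[unfolded c1_def c2_def] by (rule ennreal_leI)
  qed
qed



lemma kn_int:
  fixes \<gamma> \<beta> :: real
  assumes "0 \<le> \<gamma>" "\<gamma> < real DIM('a)" "real DIM('a) < \<beta>"
  shows "(\<integral>\<^sup>+h. ennreal (kn \<gamma> \<beta> (norm (h::'a::euclidean_space))) \<partial>lborel) < \<infinity>"
proof -
  define c1 where "c1 = \<gamma> / DIM('a)"
  define c2 where "c2 = \<beta> / DIM('a)"
  have c1: "c1 < 1" using assms by (simp add: c1_def)
  have c2: "c2 > 1" using assms by (simp add: c2_def)
  have "(\<integral>\<^sup>+h. ennreal (kn \<gamma> \<beta> (norm (h::'a))) \<partial>lborel) \<le> (\<integral>\<^sup>+h. (\<Prod>b\<in>(Basis::'a set). w1 c1 c2 (h \<bullet> b)) \<partial>lborel)"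
    unfolding c1_def c2_def using assms
    by (intro nn_integral_mono kn_le_prod) auto
  also have "\<dots> = (\<Prod>b\<in>(Basis::'a set). (\<integral>\<^sup>+t. w1 c1 c2 t \<partial>lborel))"
    by (rule nn_integral_lborel_prod) auto
  also have "\<dots> < \<infinity>"
    using w1_int[OF c1 c2] by (simp add: power_less_top_ennreal)
  finally show ?thesis .
qed

lemma nn_integral_shift:
  fixes f :: "'a::euclidean_space \<Rightarrow> ennreal"
  assumes [measurable]: "f \<in> borel_measurable borel"
  shows "(\<integral>\<^sup>+y. f (x - y) \<partial>lborel) = (\<integral>\<^sup>+y. f y \<partial>lborel)"
proof -
  have "(\<integral>\<^sup>+y. f y \<partial>lborel) = (\<integral>\<^sup>+y. f (x + (-1) *\<^sub>R y) \<partial>lborel)"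
    by (subst lborel_affine[of "-1" x]) (simp_all add: nn_integral_density nn_integral_distr)
  then show ?thesis by simp
qed



lemma cball_borel_meas[measurable]: "cball (c::'a::euclidean_space) r \<in> sets borel"
  by simp

lemma bump_gagliardo_finite:
  assumes p: "p > 1" and s: "0 < s" "s < 1"
  shows "gagliardo_pow s p (bump :: 'a::euclidean_space \<Rightarrow> real) < \<infinity>"
proof -
  obtain Lc where Lc: "Lc \<ge> 0" "\<And>x y::'a. norm (x - y) \<le> 1 \<Longrightarrow> \<bar>bump x - bump y\<bar> \<le> Lc * norm (x - y)"
    using bump_lipschitz by blast
  define d where "d = real DIM('a)"
  define \<beta> where "\<beta> = d + s * p"
  define \<gamma>0 where "\<gamma>0 = d + s * p - p"
  define \<gamma> where "\<gamma> = max \<gamma>0 0"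
  define Cb where "Cb = max (Lc powr p) (2 powr p)"
  define K where "K = cball (0::'a) 1"
  define k where "k h = ennreal (kn \<gamma> \<beta> (norm (h::'a)))" for h
  have [measurable]: "k \<in> borel_measurable borel" unfolding k_def by measurable
  have dpos: "d > 0" by (simp add: d_def)
  have g: "0 \<le> \<gamma>" "\<gamma> < real DIM('a)" "real DIM('a) < \<beta>"
    using p s dpos by (auto simp: \<gamma>_def \<gamma>0_def \<beta>_def d_def mult_less_cancel_right2)
  have Ifin: "(\<integral>\<^sup>+h. k h \<partial>lborel) < \<infinity>" unfolding k_def by (rule kn_int[OF g])
  have real_bd: "\<bar>bump x - bump y\<bar> powr p / norm (x - y) powr \<beta> \<le> Cb * kn \<gamma> \<beta> (norm (x - y))"
    if "x \<noteq> y" for x y :: 'a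
  proof -
    define n where "n = norm (x - y)"
    have n: "n > 0" using that by (simp add: n_def)
    show ?thesis
    proof (cases "n \<le> 1")
      case True
      have "\<bar>bump x - bump y\<bar> powr p \<le> (Lc * n) powr p"
        using Lc(2)[of x y] True p by (intro powr_mono2) (auto simp: n_def)
      also have "\<dots> = Lc powr p * n powr p" using Lc(1) n by (simp add: powr_mult)
      finally have "\<bar>bump x - bump y\<bar> powr p / n powr \<beta> \<le> Lc powr p * n powr p / n powr \<beta>"
        using n by (simp add: divide_right_mono)
      also have "\<dots> = Lc powr p * n powr (-\<gamma>0)"
        using n by (simp add: \<gamma>0_def \<beta>_def powr_diff)
      also have "\<dots> \<le> Lc powr p * n powr (-\<gamma>)"
        using True n by (intro mult_left_mono powr_mono') (auto simp: \<gamma>_def)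
      also have "\<dots> \<le> Cb * n powr (-\<gamma>)"
        by (intro mult_right_mono) (auto simp: Cb_def)
      finally show ?thesis using True by (simp add: kn_def n_def)
    next
      case False
      have "\<bar>bump x - bump y\<bar> \<le> 2" using bump_bound[of x] bump_bound[of y] by linarith
      then have "\<bar>bump x - bump y\<bar> powr p \<le> 2 powr p"
        using p by (intro powr_mono2) auto
      then have "\<bar>bump x - bump y\<bar> powr p / n powr \<beta> \<le> 2 powr p / n powr \<beta>"
        using n by (simp add: divide_right_mono)
      also have "\<dots> = 2 powr p * n powr (-\<beta>)" by (simp add: powr_minus divide_inverse)
      also have "\<dots> \<le> Cb * n powr (-\<beta>)"
        by (intro mult_right_mono) (auto simp: Cb_def)
      finally show ?thesis using False by (simp add: kn_def n_def)
    qed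
  qed
  have pw: "ennreal (\<bar>bump x - bump y\<bar> powr p / norm (x - y) powr (real DIM('a) + s * p))
      \<le> ennreal Cb * (indicator K x * k (x - y) + indicator K y * k (x - y))" for x y :: 'a
  proof (cases "x = y")
    case True then show ?thesis by simp
  next
    case False
    show ?thesis
    proof (cases "x \<in> K \<or> y \<in> K")
      case True
      have "ennreal (\<bar>bump x - bump y\<bar> powr p / norm (x - y) powr (real DIM('a) + s * p))
          \<le> ennreal Cb * k (x - y)"
      proof -
        have Cb0: "Cb \<ge> 0" by (simp add: Cb_def le_max_iff_disj)
        have "ennreal Cb * k (x - y) = ennreal (Cb * kn \<gamma> \<beta> (norm (x - y)))"
          using Cb0 kn_nonneg by (simp add: k_def ennreal_mult)
        then show ?thesis using real_bd[OF False] by (simp add: \<beta>_def d_def ennreal_leI)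
      qed
      also have "\<dots> \<le> ennreal Cb * (indicator K x * k (x - y) + indicator K y * k (x - y))"
        using True by (intro mult_left_mono) (auto simp: indicator_def)
      finally show ?thesis .
    next
      case F2: False
      then have "bump x = 0" "bump y = 0" using bump_zero[of x] bump_zero[of y] by (auto simp: K_def)
      then show ?thesis by simp
    qed
  qed
  have kswap: "k (x - y) = k (y - x)" for x y by (simp add: k_def norm_minus_commute)
  have "gagliardo_pow s p (bump :: 'a \<Rightarrow> real) \<le>
      (\<integral>\<^sup>+x. \<integral>\<^sup>+y. ennreal Cb * (indicator K x * k (x - y) + indicator K y * k (x - y)) \<partial>lborel \<partial>lborel)"
    unfolding gagliardo_pow_def by (intro nn_integral_mono pw)
  also have "\<dots> = ennreal Cb * ((\<integral>\<^sup>+x. \<integral>\<^sup>+y. indicator K x * k (x - y) \<partial>lborel \<partial>lborel)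
      + (\<integral>\<^sup>+x. \<integral>\<^sup>+y. indicator K y * k (x - y) \<partial>lborel \<partial>lborel))"
  proof -
    have inner: "(\<integral>\<^sup>+y. ennreal Cb * (indicator K x * k (x - y) + indicator K y * k (x - y)) \<partial>lborel)
       = ennreal Cb * ((\<integral>\<^sup>+y. indicator K x * k (x - y) \<partial>lborel) + (\<integral>\<^sup>+y. indicator K y * k (x - y) \<partial>lborel))" for x
    proof -
      have ma: "(\<lambda>y. indicator K x * k (x - y)) \<in> borel_measurable lborel" unfolding K_def k_def by measurable
      have mb: "(\<lambda>y. indicator K y * k (x - y)) \<in> borel_measurable lborel" unfolding K_def k_def by measurable
      have "(\<integral>\<^sup>+y. ennreal Cb * (indicator K x * k (x - y) + indicator K y * k (x - y)) \<partial>lborel)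
        = ennreal Cb * (\<integral>\<^sup>+y. (indicator K x * k (x - y) + indicator K y * k (x - y)) \<partial>lborel)"
        using ma mb by (intro nn_integral_cmult) auto
      also have "(\<integral>\<^sup>+y. (indicator K x * k (x - y) + indicator K y * k (x - y)) \<partial>lborel)
        = (\<integral>\<^sup>+y. indicator K x * k (x - y) \<partial>lborel) + (\<integral>\<^sup>+y. indicator K y * k (x - y) \<partial>lborel)"
        using ma mb by (intro nn_integral_add) auto
      finally show ?thesis .
    qed
    have m1: "(\<lambda>x. \<integral>\<^sup>+y. indicator K x * k (x - y) \<partial>lborel) \<in> borel_measurable lborel"
      unfolding K_def k_def by measurable
    have m2: "(\<lambda>x. \<integral>\<^sup>+y. indicator K y * k (x - y) \<partial>lborel) \<in> borel_measurable lborel"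
      unfolding K_def k_def by measurable
    show ?thesis unfolding inner using m1 m2 by (simp add: nn_integral_cmult nn_integral_add)
  qed
  also have "(\<integral>\<^sup>+x. \<integral>\<^sup>+y. indicator K x * k (x - y) \<partial>lborel \<partial>lborel) = emeasure lborel K * (\<integral>\<^sup>+h. k h \<partial>lborel)"
    by (simp add: nn_integral_cmult nn_integral_shift nn_integral_multc K_def)
  also have "(\<integral>\<^sup>+x. \<integral>\<^sup>+y. indicator K y * k (x - y) \<partial>lborel \<partial>lborel)
      = (\<integral>\<^sup>+y. \<integral>\<^sup>+x. indicator K y * k (y - x) \<partial>lborel \<partial>lborel)"
    by (subst lborel_pair.Fubini'[symmetric]) (auto simp: K_def kswap)
  also have "\<dots> = emeasure lborel K * (\<integral>\<^sup>+h. k h \<partial>lborel)"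
    by (simp add: nn_integral_cmult nn_integral_shift nn_integral_multc K_def)
  also have "ennreal Cb * (emeasure lborel K * (\<integral>\<^sup>+h. k h \<partial>lborel) + emeasure lborel K * (\<integral>\<^sup>+h. k h \<partial>lborel)) < \<infinity>"
    using Ifin emeasure_lborel_cball_finite[of "0::'a" 1]
    by (simp add: K_def ennreal_mult_less_top)
  finally show ?thesis .
qed



lemma young_pt:
  fixes f l p :: real
  assumes "f \<ge> 0" "l > 0" "p > 1"
  shows "f \<le> (1/p) * (l powr (1 - p) * f powr p) + (1 - 1/p) * l"
proof (cases "f = 0")
  case True then show ?thesis using assms by simp
next
  case False
  then have f: "f > 0" using assms by simp
  have "(l powr (1 - p) * f powr p) powr (1/p) * l powr (1 - 1/p) \<le>
        (1/p) * (l powr (1 - p) * f powr p) + (1 - 1/p) * l"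
    using assms f by (intro Youngs_inequality_0) auto
  moreover have "(l powr (1 - p) * f powr p) powr (1/p) * l powr (1 - 1/p) = f"
  proof -
    have "(l powr (1 - p) * f powr p) powr (1/p) = l powr ((1 - p) / p) * f"
      using assms f by (simp add: powr_mult powr_powr)
    moreover have "l powr ((1 - p) / p) * l powr (1 - 1/p) = 1"
      using assms by (simp add: powr_add[symmetric] field_simps)
    ultimately show ?thesis by simp
  qed
  ultimately show ?thesis by simp
qed

lemma jensen_set:
  fixes f :: "'a::euclidean_space \<Rightarrow> real"
  assumes [measurable]: "f \<in> borel_measurable borel" "B \<in> sets borel"
    and f0: "\<And>y. f y \<ge> 0" and m: "emeasure lborel B = ennreal m" "m > 0" and p: "p > 1"
    and J: "(\<integral>\<^sup>+y. ennreal (f y powr p) * indicator B y \<partial>lborel) \<le> ennreal J"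
  shows "(\<integral>\<^sup>+y. ennreal (f y) * indicator B y \<partial>lborel) \<le> ennreal (m powr (1 - 1/p) * J powr (1/p))"
proof (cases "J > 0")
  case False
  then have "(\<integral>\<^sup>+y. ennreal (f y powr p) * indicator B y \<partial>lborel) = 0"
    using J by (metis ennreal_eq_0_iff le_zero_eq linorder_not_less)
  then have "AE y in lborel. ennreal (f y powr p) * indicator B y = 0"
    by (subst (asm) nn_integral_0_iff_AE) auto
  then have "AE y in lborel. ennreal (f y) * indicator B y = 0"
    by eventually_elim (use f0 in \<open>auto simp: indicator_def\<close>)
  then have "(\<integral>\<^sup>+y. ennreal (f y) * indicator B y \<partial>lborel) = 0"
    by (subst nn_integral_0_iff_AE) auto
  then show ?thesis by simp
next
  case True
  define l where "l = (J / m) powr (1/p)"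
  have l: "l > 0" using True m by (simp add: l_def)
  have "(\<integral>\<^sup>+y. ennreal (f y) * indicator B y \<partial>lborel) \<le>
     (\<integral>\<^sup>+y. ennreal ((1/p) * l powr (1 - p)) * (ennreal (f y powr p) * indicator B y)
              + ennreal ((1 - 1/p) * l) * indicator B y \<partial>lborel)"
  proof (intro nn_integral_mono)
    fix y
    have "f y \<le> (1/p) * (l powr (1 - p) * f y powr p) + (1 - 1/p) * l"
      using young_pt[OF f0 l p] .
    then show "ennreal (f y) * indicator B y \<le> ennreal ((1/p) * l powr (1 - p)) * (ennreal (f y powr p) * indicator B y)
              + ennreal ((1 - 1/p) * l) * indicator B y"
      using p l by (auto simp: indicator_def ennreal_mult[symmetric] ennreal_plus[symmetric] ennreal_leI
          simp del: ennreal_plus)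
  qed
  also have "\<dots> = ennreal ((1/p) * l powr (1 - p)) * (\<integral>\<^sup>+y. ennreal (f y powr p) * indicator B y \<partial>lborel)
       + ennreal ((1 - 1/p) * l) * emeasure lborel B"
    by (simp add: nn_integral_add nn_integral_cmult)
  also have "\<dots> \<le> ennreal ((1/p) * l powr (1 - p)) * ennreal J + ennreal ((1 - 1/p) * l) * ennreal m"
    using J m by (intro add_mono mult_left_mono) auto
  also have "\<dots> = ennreal ((1/p) * l powr (1 - p) * J + (1 - 1/p) * l * m)"
    using p l True m by (simp add: ennreal_mult[symmetric] ennreal_plus[symmetric] del: ennreal_plus)
  also have "(1/p) * l powr (1 - p) * J + (1 - 1/p) * l * m = m powr (1 - 1/p) * J powr (1/p)"
  proof -
    have jj: "J * J powr ((1 - p) / p) = J powr (1 / p)"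
    proof -
      have "J * J powr ((1 - p) / p) = J powr (1 + (1 - p) / p)" using True by (simp add: powr_mult_base)
      also have "1 + (1 - p) / p = 1 / p" using p by (simp add: field_simps)
      finally show ?thesis .
    qed
    have e1: "l powr (1 - p) * J = m powr (1 - 1/p) * J powr (1/p)"
      using True m p jj unfolding l_def
      by (simp add: powr_powr powr_divide powr_diff[symmetric] powr_add[symmetric] field_simps)
    have mm: "m powr (1 / p) * m powr ((p - 1) / p) = m"
    proof -
      have "m powr (1 / p) * m powr ((p - 1) / p) = m powr (1 / p + (p - 1) / p)" by (simp add: powr_add)
      also have "1 / p + (p - 1) / p = 1" using p by (simp add: field_simps)
      finally show ?thesis using m by simp
    qed
    have e2: "l * m = m powr (1 - 1/p) * J powr (1/p)"
      using True m p mm unfolding l_def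
      by (simp add: powr_divide powr_diff powr_add field_simps)
    have "(1/p) * l powr (1 - p) * J + (1 - 1/p) * l * m = (1/p) * (l powr (1 - p) * J) + (1 - 1/p) * (l * m)"
      by (simp add: algebra_simps)
    also have "\<dots> = (1/p) * (m powr (1 - 1/p) * J powr (1/p)) + (1 - 1/p) * (m powr (1 - 1/p) * J powr (1/p))"
      by (simp only: e1 e2)
    also have "\<dots> = m powr (1 - 1/p) * J powr (1/p)" by (simp add: algebra_simps)
    finally show ?thesis .
  qed
  finally show ?thesis .
qed



lemma opt_rho:
  fixes z a b s \<tau> :: real
  assumes z: "z \<ge> 0" and a: "a \<ge> 0" and b: "b \<ge> 0" and s: "s > 0" and t: "\<tau> > 0"
    and H: "\<And>\<rho>. \<rho> > 0 \<Longrightarrow> z \<le> a * \<rho> powr s + b * \<rho> powr (-\<tau>)"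
  shows "z powr (s + \<tau>) \<le> 2 powr (s + \<tau>) * a powr \<tau> * b powr s"
proof (cases "a = 0 \<or> b = 0")
  case True
  have "z = 0"
  proof (rule ccontr)
    assume "z \<noteq> 0"
    then have zp: "z > 0" using z by simp
    show False
    proof (cases "a = 0")
      case True
      define \<rho> where "\<rho> = ((b + 1) / z) powr (1 / \<tau>)"
      have rp: "\<rho> > 0" using zp b by (simp add: \<rho>_def)
      have "\<rho> powr (-\<tau>) = z / (b + 1)"
        using zp b t by (simp add: \<rho>_def powr_powr powr_minus powr_divide)
      then have "z \<le> b * (z / (b + 1))" using H[OF rp] True by simp
      moreover have "b * (z / (b + 1)) < z" using zp b by (simp add: field_simps)
      ultimately show False by simp
    next
      case False
      then have b0: "b = 0" using \<open>a = 0 \<or> b = 0\<close> by simp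
      define \<rho> where "\<rho> = (z / (a + 1)) powr (1 / s)"
      have rp: "\<rho> > 0" using zp a by (simp add: \<rho>_def)
      have "\<rho> powr s = z / (a + 1)"
        using zp a s by (simp add: \<rho>_def powr_powr)
      then have "z \<le> a * (z / (a + 1))" using H[OF rp] b0 by simp
      moreover have "a * (z / (a + 1)) < z" using zp a by (simp add: field_simps)
      ultimately show False by simp
    qed
  qed
  then show ?thesis using a b by simp
next
  case False
  then have ap: "a > 0" and bp: "b > 0" using a b by auto
  define \<rho> where "\<rho> = (b / a) powr (1 / (s + \<tau>))"
  define Q where "Q = a powr (\<tau> / (s + \<tau>)) * b powr (s / (s + \<tau>))"
  have rp: "\<rho> > 0" using ap bp by (simp add: \<rho>_def)
  have st: "s + \<tau> > 0" using s t by simp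
  have e1: "a * \<rho> powr s = Q"
  proof -
    have "\<rho> powr s = b powr (s / (s + \<tau>)) / a powr (s / (s + \<tau>))"
      using ap bp by (simp add: \<rho>_def powr_powr powr_divide)
    moreover have "a = a powr (\<tau> / (s + \<tau>)) * a powr (s / (s + \<tau>))"
    proof -
      have "a powr (\<tau> / (s + \<tau>)) * a powr (s / (s + \<tau>)) = a powr (\<tau> / (s + \<tau>) + s / (s + \<tau>))"
        by (simp add: powr_add)
      also have "\<tau> / (s + \<tau>) + s / (s + \<tau>) = 1"
        using st by (simp add: add_divide_distrib[symmetric] add.commute)
      finally show ?thesis using ap by simp
    qed
    moreover have "a powr (s / (s + \<tau>)) > 0" using ap by simp
    ultimately show ?thesis unfolding Q_def
      by (metis (no_types, lifting) mult.commute nonzero_mult_div_cancel_left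
          times_divide_eq_right less_irrefl)
  qed
  have e2: "b * \<rho> powr (-\<tau>) = Q"
  proof -
    have "\<rho> powr (-\<tau>) = a powr (\<tau> / (s + \<tau>)) / b powr (\<tau> / (s + \<tau>))"
    proof -
      have "\<rho> powr (-\<tau>) = (b / a) powr (- (\<tau> / (s + \<tau>)))" by (simp add: \<rho>_def powr_powr)
      also have "\<dots> = inverse ((b / a) powr (\<tau> / (s + \<tau>)))" by (rule powr_minus)
      also have "\<dots> = a powr (\<tau> / (s + \<tau>)) / b powr (\<tau> / (s + \<tau>))"
        using ap bp by (simp add: powr_divide)
      finally show ?thesis .
    qed
    moreover have "b = b powr (\<tau> / (s + \<tau>)) * b powr (s / (s + \<tau>))"
    proof -
      have "b powr (\<tau> / (s + \<tau>)) * b powr (s / (s + \<tau>)) = b powr (\<tau> / (s + \<tau>) + s / (s + \<tau>))"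
        by (simp add: powr_add)
      also have "\<tau> / (s + \<tau>) + s / (s + \<tau>) = 1"
        using st by (simp add: add_divide_distrib[symmetric] add.commute)
      finally show ?thesis using bp by simp
    qed
    moreover have "b powr (\<tau> / (s + \<tau>)) > 0" using bp by simp
    ultimately show ?thesis unfolding Q_def
      by (metis (no_types, lifting) mult.commute nonzero_mult_div_cancel_left
          times_divide_eq_right less_irrefl)
  qed
  have "z \<le> 2 * Q" using H[OF rp] e1 e2 by simp
  then have "z powr (s + \<tau>) \<le> (2 * Q) powr (s + \<tau>)"
    using z st by (intro powr_mono2) auto
  also have "\<dots> = 2 powr (s + \<tau>) * a powr \<tau> * b powr s"
  proof -
    have x1: "\<tau> / (s + \<tau>) * (s + \<tau>) = \<tau>" "s / (s + \<tau>) * (s + \<tau>) = s" using st by auto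
    show ?thesis using ap bp st by (simp add: Q_def powr_mult powr_powr x1)
  qed
  finally show ?thesis .
qed

lemma interp:
  fixes f :: "'a::euclidean_space \<Rightarrow> real"
  assumes [measurable]: "f \<in> borel_measurable borel"
    and f0: "\<And>x. f x \<ge> 0" and th: "0 < \<theta>" "\<theta> < 1" and q: "q > 0" and r1: "r1 > 0"
    and A: "(\<integral>\<^sup>+x. ennreal (f x powr q) \<partial>lborel) = ennreal A" "A \<ge> 0"
    and Y: "(\<integral>\<^sup>+x. ennreal (f x powr r1) \<partial>lborel) = ennreal Y" "Y \<ge> 0"
  shows "(\<integral>\<^sup>+x. ennreal (f x powr (\<theta> * q + (1 - \<theta>) * r1)) \<partial>lborel) \<le> ennreal (A powr \<theta> * Y powr (1 - \<theta>))"
proof (cases "A = 0 \<or> Y = 0")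
  case True
  have "AE x in lborel. f x = 0"
  proof (cases "A = 0")
    case True
    then have "AE x in lborel. ennreal (f x powr q) = 0"
      using A by (subst nn_integral_0_iff_AE[symmetric]) auto
    then show ?thesis by eventually_elim (use f0 in auto)
  next
    case False
    then have "Y = 0" using True by simp
    then have "AE x in lborel. ennreal (f x powr r1) = 0"
      using Y by (subst nn_integral_0_iff_AE[symmetric]) auto
    then show ?thesis by eventually_elim (use f0 in auto)
  qed
  then have "AE x in lborel. ennreal (f x powr (\<theta> * q + (1 - \<theta>) * r1)) = 0"
    by eventually_elim simp
  then have "(\<integral>\<^sup>+x. ennreal (f x powr (\<theta> * q + (1 - \<theta>) * r1)) \<partial>lborel) = 0"
    by (subst nn_integral_0_iff_AE) auto
  then show ?thesis by simp
next
  case False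
  then have Ap: "A > 0" and Yp: "Y > 0" using A Y by auto
  define C where "C = A powr \<theta> * Y powr (1 - \<theta>)"
  have Cp: "C > 0" using Ap Yp by (simp add: C_def)
  have pt: "f x powr (\<theta> * q + (1 - \<theta>) * r1) \<le> (C * \<theta> / A) * f x powr q + (C * (1 - \<theta>) / Y) * f x powr r1" for x
  proof (cases "f x = 0")
    case True then show ?thesis by simp
  next
    case False
    then have fp: "f x > 0" using f0[of x] by simp
    have "(f x powr q / A) powr \<theta> * (f x powr r1 / Y) powr (1 - \<theta>) \<le> \<theta> * (f x powr q / A) + (1 - \<theta>) * (f x powr r1 / Y)"
      using th fp Ap Yp by (intro Youngs_inequality_0) auto
    moreover have "(f x powr q / A) powr \<theta> * (f x powr r1 / Y) powr (1 - \<theta>) = f x powr (\<theta> * q + (1 - \<theta>) * r1) / C"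
    proof -
      have sp: "f x powr (\<theta> * q + (1 - \<theta>) * r1) = f x powr (q * \<theta>) * f x powr (r1 * (1 - \<theta>))"
        by (simp add: powr_add[symmetric] algebra_simps)
      show ?thesis unfolding sp using fp Ap Yp by (simp add: C_def powr_divide powr_powr)
    qed
    ultimately have "f x powr (\<theta> * q + (1 - \<theta>) * r1) / C \<le> \<theta> * (f x powr q / A) + (1 - \<theta>) * (f x powr r1 / Y)"
      by simp
    then show ?thesis using Cp by (simp add: field_simps)
  qed
  have "(\<integral>\<^sup>+x. ennreal (f x powr (\<theta> * q + (1 - \<theta>) * r1)) \<partial>lborel)
      \<le> (\<integral>\<^sup>+x. ennreal (C * \<theta> / A) * ennreal (f x powr q) + ennreal (C * (1 - \<theta>) / Y) * ennreal (f x powr r1) \<partial>lborel)"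
  proof (intro nn_integral_mono)
    fix x
    show "ennreal (f x powr (\<theta> * q + (1 - \<theta>) * r1)) \<le> ennreal (C * \<theta> / A) * ennreal (f x powr q) + ennreal (C * (1 - \<theta>) / Y) * ennreal (f x powr r1)"
      using pt[of x] Cp Ap Yp th
      by (simp add: ennreal_mult[symmetric] ennreal_plus[symmetric] ennreal_leI del: ennreal_plus)
  qed
  also have "\<dots> = ennreal (C * \<theta> / A) * ennreal A + ennreal (C * (1 - \<theta>) / Y) * ennreal Y"
    by (simp add: nn_integral_add nn_integral_cmult A Y)
  also have "\<dots> = ennreal C"
  proof -
    have "C * \<theta> / A * A + C * (1 - \<theta>) / Y * Y = C" using Ap Yp by (simp add: field_simps)
    then show ?thesis using Cp Ap Yp th
      by (simp add: ennreal_mult[symmetric] ennreal_plus[symmetric] del: ennreal_plus)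
  qed
  finally show ?thesis by (simp add: C_def)
qed



lemma ball_borel_meas[measurable]: "ball (c::'a::euclidean_space) r \<in> sets borel"
  by simp

lemma pointwise_est:
  fixes v :: "'a::euclidean_space \<Rightarrow> real"
  assumes [measurable]: "v \<in> borel_measurable borel"
    and p: "p > 1" and s: "s > 0" and r: "r > 1"
    and X: "(\<integral>\<^sup>+y. ennreal (\<bar>v y\<bar> powr r) \<partial>lborel) \<le> ennreal X" "X \<ge> 0"
    and G: "(\<integral>\<^sup>+y. ennreal (\<bar>v x - v y\<bar> powr p / norm (x - y) powr (real DIM('a) + s * p)) \<partial>lborel) \<le> ennreal G" "G \<ge> 0"
    and rho: "\<rho> > 0"
  shows "\<bar>v x\<bar> \<le> unit_ball_vol (real DIM('a)) powr (-1/p) * G powr (1/p) * \<rho> powr s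
          + unit_ball_vol (real DIM('a)) powr (-1/r) * X powr (1/r) * \<rho> powr (-(real DIM('a) / r))"
proof -
  define d where "d = real DIM('a)"
  define \<omega> where "\<omega> = unit_ball_vol d"
  define \<beta> where "\<beta> = d + s * p"
  define m where "m = \<omega> * \<rho> powr d"
  define B where "B = ball x \<rho>"
  have [measurable]: "B \<in> sets borel" by (simp add: B_def)
  have \<omega>: "\<omega> > 0" by (simp add: \<omega>_def d_def)
  have mpos: "m > 0" using \<omega> rho by (simp add: m_def)
  have mB: "emeasure lborel B = ennreal m"
    using rho by (simp add: B_def m_def \<omega>_def d_def emeasure_ball powr_realpow)
  have a: "(\<integral>\<^sup>+y. ennreal (\<bar>v x - v y\<bar> powr p) * indicator B y \<partial>lborel) \<le> ennreal (\<rho> powr \<beta> * G)"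
  proof -
    have "(\<integral>\<^sup>+y. ennreal (\<bar>v x - v y\<bar> powr p) * indicator B y \<partial>lborel)
        \<le> (\<integral>\<^sup>+y. ennreal (\<rho> powr \<beta>) * ennreal (\<bar>v x - v y\<bar> powr p / norm (x - y) powr \<beta>) \<partial>lborel)"
    proof (intro nn_integral_mono)
      fix y
      show "ennreal (\<bar>v x - v y\<bar> powr p) * indicator B y
          \<le> ennreal (\<rho> powr \<beta>) * ennreal (\<bar>v x - v y\<bar> powr p / norm (x - y) powr \<beta>)"
      proof (cases "y \<in> B \<and> y \<noteq> x")
        case True
        define n where "n = norm (x - y)"
        have n: "n > 0" "n < \<rho>" using True by (auto simp: n_def B_def dist_norm)
        have bp: "\<beta> > 0" using s p by (simp add: \<beta>_def d_def add_pos_pos)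
        have "\<bar>v x - v y\<bar> powr p = (\<bar>v x - v y\<bar> powr p / n powr \<beta>) * n powr \<beta>"
          using n by simp
        also have "\<dots> \<le> (\<bar>v x - v y\<bar> powr p / n powr \<beta>) * \<rho> powr \<beta>"
          using n bp by (intro mult_left_mono powr_mono2) auto
        finally have "\<bar>v x - v y\<bar> powr p \<le> \<rho> powr \<beta> * (\<bar>v x - v y\<bar> powr p / n powr \<beta>)"
          by (simp add: mult.commute)
        then show ?thesis using True
          by (simp add: n_def ennreal_mult[symmetric] ennreal_leI)
      next
        case False
        then show ?thesis by (auto simp: indicator_def)
      qed
    qed
    also have "\<dots> = ennreal (\<rho> powr \<beta>) * (\<integral>\<^sup>+y. ennreal (\<bar>v x - v y\<bar> powr p / norm (x - y) powr \<beta>) \<partial>lborel)"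
      by (rule nn_integral_cmult) measurable
    also have "\<dots> \<le> ennreal (\<rho> powr \<beta>) * ennreal G"
      using G by (intro mult_left_mono) (auto simp: \<beta>_def d_def)
    also have "\<dots> = ennreal (\<rho> powr \<beta> * G)" using G by (simp add: ennreal_mult)
    finally show ?thesis .
  qed
  have b: "(\<integral>\<^sup>+y. ennreal (\<bar>v x - v y\<bar>) * indicator B y \<partial>lborel)
      \<le> ennreal (m powr (1 - 1/p) * (\<rho> powr \<beta> * G) powr (1/p))"
    by (rule jensen_set[OF _ _ _ mB mpos p a]) auto
  have c0: "(\<integral>\<^sup>+y. ennreal (\<bar>v y\<bar> powr r) * indicator B y \<partial>lborel) \<le> ennreal X"
  proof -
    have "(\<integral>\<^sup>+y. ennreal (\<bar>v y\<bar> powr r) * indicator B y \<partial>lborel) \<le> (\<integral>\<^sup>+y. ennreal (\<bar>v y\<bar> powr r) \<partial>lborel)"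
      by (intro nn_integral_mono) (auto simp: indicator_def)
    then show ?thesis using X by simp
  qed
  have c: "(\<integral>\<^sup>+y. ennreal (\<bar>v y\<bar>) * indicator B y \<partial>lborel) \<le> ennreal (m powr (1 - 1/r) * X powr (1/r))"
    by (rule jensen_set[OF _ _ _ mB mpos r c0]) auto
  have "ennreal (\<bar>v x\<bar> * m) = (\<integral>\<^sup>+y. ennreal (\<bar>v x\<bar>) * indicator B y \<partial>lborel)"
    using mB mpos by (simp add: nn_integral_cmult_indicator ennreal_mult)
  also have "\<dots> \<le> (\<integral>\<^sup>+y. ennreal (\<bar>v x - v y\<bar>) * indicator B y + ennreal (\<bar>v y\<bar>) * indicator B y \<partial>lborel)"
  proof (intro nn_integral_mono)
    fix y
    have "\<bar>v x\<bar> \<le> \<bar>v x - v y\<bar> + \<bar>v y\<bar>" by linarith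
    then show "ennreal (\<bar>v x\<bar>) * indicator B y \<le> ennreal (\<bar>v x - v y\<bar>) * indicator B y + ennreal (\<bar>v y\<bar>) * indicator B y"
      by (auto simp: indicator_def ennreal_plus[symmetric] ennreal_leI simp del: ennreal_plus)
  qed
  also have "\<dots> = (\<integral>\<^sup>+y. ennreal (\<bar>v x - v y\<bar>) * indicator B y \<partial>lborel) + (\<integral>\<^sup>+y. ennreal (\<bar>v y\<bar>) * indicator B y \<partial>lborel)"
    by (rule nn_integral_add) measurable
  also have "\<dots> \<le> ennreal (m powr (1 - 1/p) * (\<rho> powr \<beta> * G) powr (1/p)) + ennreal (m powr (1 - 1/r) * X powr (1/r))"
    using b c by (rule add_mono)
  also have "\<dots> = ennreal (m powr (1 - 1/p) * (\<rho> powr \<beta> * G) powr (1/p) + m powr (1 - 1/r) * X powr (1/r))"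
    by (simp add: ennreal_plus)
  finally have main: "\<bar>v x\<bar> * m \<le> m powr (1 - 1/p) * (\<rho> powr \<beta> * G) powr (1/p) + m powr (1 - 1/r) * X powr (1/r)"
    by (subst (asm) ennreal_le_iff) auto
  have mp1: "m powr (1 - 1/t) = m * m powr (-1/t)" for t
  proof -
    have "m powr (1 - 1/t) = m powr (1 + (-1/t))" by simp
    also have "\<dots> = m powr 1 * m powr (-1/t)" by (rule powr_add)
    also have "\<dots> = m * m powr (-1/t)" using mpos by simp
    finally show ?thesis .
  qed
  have mp: "m powr (1 - 1/p) = m * m powr (-1/p)" "m powr (1 - 1/r) = m * m powr (-1/r)"
    by (rule mp1)+
  have "\<bar>v x\<bar> * m \<le> (m powr (-1/p) * (\<rho> powr \<beta> * G) powr (1/p) + m powr (-1/r) * X powr (1/r)) * m"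
    using main unfolding mp by (simp add: ring_distribs mult_ac)
  then have "\<bar>v x\<bar> \<le> m powr (-1/p) * (\<rho> powr \<beta> * G) powr (1/p) + m powr (-1/r) * X powr (1/r)"
    using mpos by (simp only: mult_le_cancel_right_pos)
  also have "m powr (-1/p) * (\<rho> powr \<beta> * G) powr (1/p) = \<omega> powr (-1/p) * G powr (1/p) * \<rho> powr s"
  proof -
    have "m powr (-1/p) * (\<rho> powr \<beta> * G) powr (1/p)
        = \<omega> powr (-1/p) * G powr (1/p) * (\<rho> powr (d * (-1/p)) * \<rho> powr (\<beta> * (1/p)))"
      using \<omega> rho G by (simp add: m_def powr_mult powr_powr algebra_simps)
    also have "\<rho> powr (d * (-1/p)) * \<rho> powr (\<beta> * (1/p)) = \<rho> powr s"
    proof -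
      have "d * (-1/p) + \<beta> * (1/p) = s" using p by (simp add: \<beta>_def field_simps)
      then show ?thesis by (simp add: powr_add[symmetric])
    qed
    finally show ?thesis .
  qed
  also have "m powr (-1/r) * X powr (1/r) = \<omega> powr (-1/r) * X powr (1/r) * \<rho> powr (-(d / r))"
    using \<omega> rho by (simp add: m_def powr_mult powr_powr algebra_simps)
  finally show ?thesis by (simp add: \<omega>_def d_def)
qed



lemma pointwise_r1:
  fixes v :: "'a::euclidean_space \<Rightarrow> real"
  assumes [measurable]: "v \<in> borel_measurable borel"
    and p: "p > 1" and s: "s > 0" and r: "r > 1"
    and X: "(\<integral>\<^sup>+y. ennreal (\<bar>v y\<bar> powr r) \<partial>lborel) \<le> ennreal X" "X \<ge> 0"
    and G: "(\<integral>\<^sup>+y. ennreal (\<bar>v x - v y\<bar> powr p / norm (x - y) powr (real DIM('a) + s * p)) \<partial>lborel) \<le> ennreal G" "G \<ge> 0"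
  shows "\<bar>v x\<bar> powr (p * (s * r + real DIM('a)) / real DIM('a)) \<le>
     2 powr (p * (s * r + real DIM('a)) / real DIM('a)) * unit_ball_vol (real DIM('a)) powr (-1 - s * p / real DIM('a))
       * G * X powr (s * p / real DIM('a))"
proof -
  define d where "d = real DIM('a)"
  define \<omega> where "\<omega> = unit_ball_vol d"
  define a where "a = \<omega> powr (-1/p) * G powr (1/p)"
  define b where "b = \<omega> powr (-1/r) * X powr (1/r)"
  define \<tau> where "\<tau> = d / r"
  define e where "e = p * r / d"
  have dpos: "d > 0" by (simp add: d_def)
  have \<omega>: "\<omega> > 0" by (simp add: \<omega>_def d_def)
  have tpos: "\<tau> > 0" using dpos r by (simp add: \<tau>_def)
  have epos: "e > 0" using dpos r p by (simp add: e_def)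
  have H: "\<bar>v x\<bar> \<le> a * \<rho> powr s + b * \<rho> powr (-\<tau>)" if "\<rho> > 0" for \<rho>
    using pointwise_est[OF assms(1) p s r X G that] by (simp add: a_def b_def \<tau>_def \<omega>_def d_def)
  have "\<bar>v x\<bar> powr (s + \<tau>) \<le> 2 powr (s + \<tau>) * a powr \<tau> * b powr s"
    by (rule opt_rho[OF _ _ _ s tpos H]) (auto simp: a_def b_def)
  then have "(\<bar>v x\<bar> powr (s + \<tau>)) powr e \<le> (2 powr (s + \<tau>) * a powr \<tau> * b powr s) powr e"
    using epos by (intro powr_mono2) auto
  also have "(\<bar>v x\<bar> powr (s + \<tau>)) powr e = \<bar>v x\<bar> powr (p * (s * r + d) / d)"
  proof -
    have "(s + \<tau>) * e = p * (s * r + d) / d" using dpos r by (simp add: \<tau>_def e_def field_simps)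
    then show ?thesis by (simp add: powr_powr)
  qed
  also have "(2 powr (s + \<tau>) * a powr \<tau> * b powr s) powr e
      = 2 powr ((s + \<tau>) * e) * a powr (\<tau> * e) * b powr (s * e)"
    by (simp add: powr_mult powr_powr a_def b_def)
  also have "(s + \<tau>) * e = p * (s * r + d) / d" using dpos r by (simp add: \<tau>_def e_def field_simps)
  also have "a powr (\<tau> * e) = \<omega> powr (-1) * G"
  proof -
    have te: "\<tau> * e = p" using dpos r by (simp add: \<tau>_def e_def)
    have "a powr p = (\<omega> powr (-1/p)) powr p * (G powr (1/p)) powr p"
      by (simp add: a_def powr_mult)
    also have "\<dots> = \<omega> powr (-1) * G"
      using p G by (simp add: powr_powr)
    finally show ?thesis by (simp add: te)
  qed
  also have "b powr (s * e) = \<omega> powr (- (s * p / d)) * X powr (s * p / d)"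
  proof -
    have "b powr (s * e) = (\<omega> powr (-1/r)) powr (s * e) * (X powr (1/r)) powr (s * e)"
      by (simp add: b_def powr_mult)
    also have "\<dots> = \<omega> powr (- (s * p / d)) * X powr (s * p / d)"
    proof -
      have "-1/r * (s * e) = - (s * p / d)" "1/r * (s * e) = s * p / d"
        using r dpos by (simp_all add: e_def field_simps)
      then show ?thesis by (simp add: powr_powr)
    qed
    finally show ?thesis .
  qed
  finally have fin: "\<bar>v x\<bar> powr (p * (s * r + d) / d)
      \<le> 2 powr (p * (s * r + d) / d) * (\<omega> powr (-1) * G) * (\<omega> powr (- (s * p / d)) * X powr (s * p / d))" .
  have om: "\<omega> powr (-1 - s * p / d) = \<omega> powr (-1) * \<omega> powr (- (s * p / d))"
  proof -
    have "\<omega> powr (-1 - s * p / d) = \<omega> powr (-1 + - (s * p / d))" by simp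
    also have "\<dots> = \<omega> powr (-1) * \<omega> powr (- (s * p / d))" by (rule powr_add)
    finally show ?thesis .
  qed
  show ?thesis using fin unfolding d_def[symmetric] \<omega>_def[symmetric] om by (simp only: mult_ac)
qed



lemma gag_inner_meas:
  fixes v :: "'a::euclidean_space \<Rightarrow> real"
  assumes [measurable]: "v \<in> borel_measurable borel"
  shows "(\<lambda>x. \<integral>\<^sup>+y. ennreal (\<bar>v x - v y\<bar> powr p / norm (x - y) powr (real DIM('a) + s * p)) \<partial>lborel)
    \<in> borel_measurable lborel"
  by measurable

lemma core_int:
  fixes v :: "'a::euclidean_space \<Rightarrow> real"
  assumes [measurable]: "v \<in> borel_measurable borel"
    and p: "p > 1" and s: "s > 0" and r: "r > 1"
    and X: "Lp_pow r v \<le> ennreal X" "X > 0"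
  shows "(\<integral>\<^sup>+x. ennreal (\<bar>v x\<bar> powr (p * (s * r + real DIM('a)) / real DIM('a))) \<partial>lborel) \<le>
     ennreal (2 powr (p * (s * r + real DIM('a)) / real DIM('a)) * unit_ball_vol (real DIM('a)) powr (-1 - s * p / real DIM('a))
       * X powr (s * p / real DIM('a))) * gagliardo_pow s p v"
proof -
  define c where "c = 2 powr (p * (s * r + real DIM('a)) / real DIM('a)) * unit_ball_vol (real DIM('a)) powr (-1 - s * p / real DIM('a))
       * X powr (s * p / real DIM('a))"
  define g where "g x = (\<integral>\<^sup>+y. ennreal (\<bar>v x - v y\<bar> powr p / norm (x - y) powr (real DIM('a) + s * p)) \<partial>lborel)" for x
  have uv: "unit_ball_vol (real DIM('a)) > 0" by simp
  then have uv': "unit_ball_vol (real DIM('a)) \<noteq> 0" by linarith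
  have cpos: "c > 0" unfolding c_def
    by (intro mult_pos_pos powr_gt_zero[THEN iffD2]) (use X uv' in auto)
  have gm: "g \<in> borel_measurable lborel" unfolding g_def by (rule gag_inner_meas) measurable
  have pt: "ennreal (\<bar>v x\<bar> powr (p * (s * r + real DIM('a)) / real DIM('a))) \<le> ennreal c * g x" for x
  proof (cases "g x" rule: ennreal_cases)
    case (real G)
    have Gx: "(\<integral>\<^sup>+y. ennreal (\<bar>v x - v y\<bar> powr p / norm (x - y) powr (real DIM('a) + s * p)) \<partial>lborel) \<le> ennreal G"
      using real by (simp add: g_def)
    have X': "(\<integral>\<^sup>+y. ennreal (\<bar>v y\<bar> powr r) \<partial>lborel) \<le> ennreal X" using X(1) by (simp add: Lp_pow_def)
    have "\<bar>v x\<bar> powr (p * (s * r + real DIM('a)) / real DIM('a)) \<le> c * G"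
      using pointwise_r1[OF assms(1) p s r X' _ Gx] X real
      by (simp add: c_def mult_ac)
    then show ?thesis using real cpos by (simp add: ennreal_mult[symmetric] ennreal_leI)
  next
    case top
    then show ?thesis using cpos by (simp add: ennreal_mult_top)
  qed
  have "(\<integral>\<^sup>+x. ennreal (\<bar>v x\<bar> powr (p * (s * r + real DIM('a)) / real DIM('a))) \<partial>lborel) \<le> (\<integral>\<^sup>+x. ennreal c * g x \<partial>lborel)"
    by (intro nn_integral_mono pt)
  also have "\<dots> = ennreal c * (\<integral>\<^sup>+x. g x \<partial>lborel)" using gm by (rule nn_integral_cmult)
  also have "(\<integral>\<^sup>+x. g x \<partial>lborel) = gagliardo_pow s p v" by (simp add: g_def gagliardo_pow_def)
  finally show ?thesis by (simp add: c_def)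
qed





lemma Lp_pow_bounded_finite:
  fixes v :: "'a::euclidean_space \<Rightarrow> real"
  assumes [measurable]: "v \<in> borel_measurable borel"
    and M: "\<And>x. \<bar>v x\<bar> \<le> M" and q: "q > 0" and t: "t \<ge> q"
    and A: "Lp_pow q v < \<infinity>"
  shows "Lp_pow t v < \<infinity>"
proof -
  have M0: "M \<ge> 0" using M[of 0] by simp
  have "Lp_pow t v \<le> (\<integral>\<^sup>+x. ennreal (M powr (t - q)) * ennreal (\<bar>v x\<bar> powr q) \<partial>lborel)"
    unfolding Lp_pow_def
  proof (intro nn_integral_mono)
    fix x
    have "\<bar>v x\<bar> powr t \<le> M powr (t - q) * \<bar>v x\<bar> powr q"
    proof (cases "v x = 0")
      case True then show ?thesis by simp
    next
      case False
      have "\<bar>v x\<bar> powr t = \<bar>v x\<bar> powr ((t - q) + q)" by simp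
      also have "\<dots> = \<bar>v x\<bar> powr (t - q) * \<bar>v x\<bar> powr q" by (rule powr_add)
      finally have "\<bar>v x\<bar> powr t = \<bar>v x\<bar> powr (t - q) * \<bar>v x\<bar> powr q" .
      also have "\<dots> \<le> M powr (t - q) * \<bar>v x\<bar> powr q"
        using M[of x] t by (intro mult_right_mono powr_mono2) auto
      finally show ?thesis .
    qed
    then show "ennreal (\<bar>v x\<bar> powr t) \<le> ennreal (M powr (t - q)) * ennreal (\<bar>v x\<bar> powr q)"
      by (simp add: ennreal_mult[symmetric] ennreal_leI)
  qed
  also have "\<dots> = ennreal (M powr (t - q)) * Lp_pow q v"
    unfolding Lp_pow_def by (rule nn_integral_cmult) measurable
  also have "\<dots> < \<infinity>" using A by (simp add: ennreal_mult_less_top)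
  finally show ?thesis .
qed

lemma bounded_GN:
  fixes v :: "'a::euclidean_space \<Rightarrow> real"
  assumes [measurable]: "v \<in> borel_measurable borel"
    and M: "\<And>x. \<bar>v x\<bar> \<le> M"
    and p: "p > 1" and s: "s > 0" and q: "q > 0" and r: "r > 1" and qr: "q < r"
    and rr1: "r < p * (s * r + real DIM('a)) / real DIM('a)"
    and e: "0 < 1 - (1 - (p * (s * r + real DIM('a)) / real DIM('a) - r) / (p * (s * r + real DIM('a)) / real DIM('a) - q)) * (s * p / real DIM('a))"
    and A: "Lp_pow q v \<le> ennreal A" "A \<ge> 0"
    and V: "gagliardo_pow s p v \<le> ennreal V" "V \<ge> 0"
  shows "Lp_pow r v \<le> ennreal ((A powr ((p * (s * r + real DIM('a)) / real DIM('a) - r) / (p * (s * r + real DIM('a)) / real DIM('a) - q))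
     * (2 powr (p * (s * r + real DIM('a)) / real DIM('a)) * unit_ball_vol (real DIM('a)) powr (-1 - s * p / real DIM('a)) * V)
         powr (1 - (p * (s * r + real DIM('a)) / real DIM('a) - r) / (p * (s * r + real DIM('a)) / real DIM('a) - q)))
     powr (1 / (1 - (1 - (p * (s * r + real DIM('a)) / real DIM('a) - r) / (p * (s * r + real DIM('a)) / real DIM('a) - q)) * (s * p / real DIM('a)))))"
proof -
  define d where "d = real DIM('a)"
  define r1 where "r1 = p * (s * r + d) / d"
  define \<theta> where "\<theta> = (r1 - r) / (r1 - q)"
  define \<kappa> where "\<kappa> = s * p / d"
  define ee where "ee = 1 - (1 - \<theta>) * \<kappa>"
  define Cc where "Cc = 2 powr r1 * unit_ball_vol d powr (-1 - s * p / d)"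
  have dpos: "d > 0" by (simp add: d_def)
  have rr1': "r < r1" using rr1 by (simp add: r1_def d_def)
  have th: "0 < \<theta>" "\<theta> < 1" using rr1' qr by (auto simp: \<theta>_def field_simps)
  have eep: "ee > 0" using e by (simp add: ee_def \<theta>_def \<kappa>_def r1_def d_def)
  have kp: "\<kappa> > 0" using s p dpos by (simp add: \<kappa>_def)
  have uv: "unit_ball_vol d > 0" by (simp add: d_def)
  then have uv': "unit_ball_vol d \<noteq> 0" by linarith
  have Cc: "Cc > 0" unfolding Cc_def by (intro mult_pos_pos powr_gt_zero[THEN iffD2]) (use uv' in auto)
  have Afin: "Lp_pow q v < \<infinity>" using A(1) by (simp add: le_less_trans)
  have Xfin: "Lp_pow r v < \<infinity>" by (rule Lp_pow_bounded_finite[OF _ M q _ Afin]) (use qr in auto)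
  have Yfin: "Lp_pow r1 v < \<infinity>" by (rule Lp_pow_bounded_finite[OF _ M q _ Afin]) (use qr rr1' in auto)
  obtain A0 where A0: "Lp_pow q v = ennreal A0" "A0 \<ge> 0" using Afin by (cases "Lp_pow q v") auto
  obtain X0 where X0: "Lp_pow r v = ennreal X0" "X0 \<ge> 0" using Xfin by (cases "Lp_pow r v") auto
  obtain Y0 where Y0: "Lp_pow r1 v = ennreal Y0" "Y0 \<ge> 0" using Yfin by (cases "Lp_pow r1 v") auto
  have AA: "A0 \<le> A" using A A0 by (simp add: ennreal_le_iff)
  define W where "W = A powr \<theta> * (Cc * V) powr (1 - \<theta>)"
  show ?thesis
  proof (cases "X0 = 0")
    case True
    then show ?thesis using X0 by simp
  next
    case False
    then have Xp: "X0 > 0" using X0 by simp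
    have core: "Lp_pow r1 v \<le> ennreal (Cc * X0 powr \<kappa>) * gagliardo_pow s p v"
      using core_int[OF assms(1) p s r, of X0] X0 Xp
      by (simp add: Lp_pow_def r1_def Cc_def \<kappa>_def d_def)
    also have "\<dots> \<le> ennreal (Cc * X0 powr \<kappa>) * ennreal V" using V by (intro mult_left_mono) auto
    also have "\<dots> = ennreal (Cc * X0 powr \<kappa> * V)" using Cc V by (simp add: ennreal_mult)
    finally have Yb0: "ennreal Y0 \<le> ennreal (Cc * X0 powr \<kappa> * V)" using Y0 by simp
    have "Cc * X0 powr \<kappa> * V \<ge> 0" using Cc V by simp
    then have Yb: "Y0 \<le> Cc * X0 powr \<kappa> * V" using Yb0 by (simp add: ennreal_le_iff)
    have rexp: "\<theta> * q + (1 - \<theta>) * r1 = r"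
    proof -
      have ne: "r1 - q \<noteq> 0" using rr1' qr by simp
      have h: "\<theta> * (r1 - q) = r1 - r" using ne by (simp add: \<theta>_def)
      have "\<theta> * q + (1 - \<theta>) * r1 = r1 - \<theta> * (r1 - q)" by (simp add: algebra_simps)
      then show ?thesis using h by simp
    qed
    have "ennreal X0 \<le> ennreal (A0 powr \<theta> * Y0 powr (1 - \<theta>))"
      using interp[of "\<lambda>x. \<bar>v x\<bar>" \<theta> q r1 A0 Y0] th q rr1' qr A0 Y0 X0 rexp
      by (simp add: Lp_pow_def)
    then have Xb: "X0 \<le> A0 powr \<theta> * Y0 powr (1 - \<theta>)" by (simp add: ennreal_le_iff)
    also have "\<dots> \<le> A powr \<theta> * (Cc * X0 powr \<kappa> * V) powr (1 - \<theta>)"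
      using AA A0 Y0 Yb th by (intro mult_mono powr_mono2) auto
    also have "\<dots> = W * X0 powr (\<kappa> * (1 - \<theta>))"
      using Cc V Xp by (simp add: W_def powr_mult powr_powr mult_ac)
    finally have "X0 \<le> W * X0 powr (\<kappa> * (1 - \<theta>))" .
    then have "X0 / X0 powr (\<kappa> * (1 - \<theta>)) \<le> W" using Xp by (simp add: divide_le_eq)
    moreover have "X0 / X0 powr (\<kappa> * (1 - \<theta>)) = X0 powr ee"
    proof -
      have "X0 powr ee = X0 powr (1 - \<kappa> * (1 - \<theta>))" by (simp add: ee_def mult.commute)
      also have "\<dots> = X0 powr 1 / X0 powr (\<kappa> * (1 - \<theta>))" by (rule powr_diff)
      also have "\<dots> = X0 / X0 powr (\<kappa> * (1 - \<theta>))" using Xp by simp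
      finally show ?thesis by simp
    qed
    ultimately have "X0 powr ee \<le> W" by simp
    then have "(X0 powr ee) powr (1 / ee) \<le> W powr (1 / ee)"
      using eep Xp by (intro powr_mono2) auto
    then have "X0 \<le> W powr (1 / ee)" using eep Xp by (simp add: powr_powr)
    then show ?thesis using X0
      by (simp add: W_def \<theta>_def r1_def ee_def \<kappa>_def Cc_def d_def ennreal_leI)
  qed
qed



definition clampn :: "nat \<Rightarrow> real \<Rightarrow> real" where
  "clampn n a = max (- real n) (min (real n) a)"

lemma clampn_abs: "\<bar>clampn n a\<bar> = min (real n) \<bar>a\<bar>"
  by (auto simp: clampn_def max_def min_def abs_if)

lemma clampn_lip: "\<bar>clampn n a - clampn n b\<bar> \<le> \<bar>a - b\<bar>"
  by (auto simp: clampn_def max_def min_def abs_if)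

lemma clampn_meas[measurable]: "clampn n \<in> borel_measurable borel"
  unfolding clampn_def by measurable

lemma GN_general:
  fixes u :: "'a::euclidean_space \<Rightarrow> real"
  assumes um: "u \<in> borel_measurable lborel"
    and p: "p > 1" and s: "s > 0" and q: "q > 0" and r: "r > 1" and qr: "q < r"
    and rr1: "r < p * (s * r + real DIM('a)) / real DIM('a)"
    and e: "0 < 1 - (1 - (p * (s * r + real DIM('a)) / real DIM('a) - r) / (p * (s * r + real DIM('a)) / real DIM('a) - q)) * (s * p / real DIM('a))"
    and Afin: "Lp_pow q u < \<infinity>"
    and Vfin: "gagliardo_pow s p u < \<infinity>"
  shows "Lp_pow r u \<le> ennreal ((enn2real (Lp_pow q u) powr ((p * (s * r + real DIM('a)) / real DIM('a) - r) / (p * (s * r + real DIM('a)) / real DIM('a) - q))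
     * (2 powr (p * (s * r + real DIM('a)) / real DIM('a)) * unit_ball_vol (real DIM('a)) powr (-1 - s * p / real DIM('a)) * enn2real (gagliardo_pow s p u))
         powr (1 - (p * (s * r + real DIM('a)) / real DIM('a) - r) / (p * (s * r + real DIM('a)) / real DIM('a) - q)))
     powr (1 / (1 - (1 - (p * (s * r + real DIM('a)) / real DIM('a) - r) / (p * (s * r + real DIM('a)) / real DIM('a) - q)) * (s * p / real DIM('a)))))"
    (is "_ \<le> ennreal ?K")
proof -
  have [measurable]: "u \<in> borel_measurable borel" using um by simp
  define v where "v n x = clampn n (u x)" for n x
  have vm[measurable]: "v n \<in> borel_measurable borel" for n unfolding v_def by measurable
  have A: "Lp_pow q u = ennreal (enn2real (Lp_pow q u))" using Afin by simp
  have V: "gagliardo_pow s p u = ennreal (enn2real (gagliardo_pow s p u))" using Vfin by simp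
  have bound: "Lp_pow r (v n) \<le> ennreal ?K" for n
  proof (rule bounded_GN[OF vm _ p s q r qr rr1 e])
    show "\<bar>v n x\<bar> \<le> real n" for x by (simp add: v_def clampn_abs)
    have "Lp_pow q (v n) \<le> Lp_pow q u"
      unfolding Lp_pow_def
      by (intro nn_integral_mono ennreal_leI powr_mono2) (use q in \<open>auto simp: v_def clampn_abs\<close>)
    then show "Lp_pow q (v n) \<le> ennreal (enn2real (Lp_pow q u))" using A by simp
    show "0 \<le> enn2real (Lp_pow q u)" by simp
    have "gagliardo_pow s p (v n) \<le> gagliardo_pow s p u"
      unfolding gagliardo_pow_def
      by (intro nn_integral_mono ennreal_leI divide_right_mono powr_mono2)
         (use p in \<open>auto simp: v_def clampn_lip\<close>)
    then show "gagliardo_pow s p (v n) \<le> ennreal (enn2real (gagliardo_pow s p u))" using V by simp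
    show "0 \<le> enn2real (gagliardo_pow s p u)" by simp
  qed
  have inc: "incseq (\<lambda>n x. ennreal (\<bar>v n x\<bar> powr r))"
  proof (intro incseq_SucI le_funI)
    fix n x
    show "ennreal (\<bar>v n x\<bar> powr r) \<le> ennreal (\<bar>v (Suc n) x\<bar> powr r)"
      by (intro ennreal_leI powr_mono2) (use r in \<open>auto simp: v_def clampn_abs\<close>)
  qed
  have sup: "(SUP n. ennreal (\<bar>v n x\<bar> powr r)) = ennreal (\<bar>u x\<bar> powr r)" for x
  proof (rule antisym)
    show "(SUP n. ennreal (\<bar>v n x\<bar> powr r)) \<le> ennreal (\<bar>u x\<bar> powr r)"
      by (intro SUP_least ennreal_leI powr_mono2) (use r in \<open>auto simp: v_def clampn_abs\<close>)
    obtain n :: nat where n: "\<bar>u x\<bar> \<le> real n" using real_arch_simple by blast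
    have "ennreal (\<bar>u x\<bar> powr r) = ennreal (\<bar>v n x\<bar> powr r)"
      using n by (simp add: v_def clampn_abs)
    also have "\<dots> \<le> (SUP n. ennreal (\<bar>v n x\<bar> powr r))" by (rule SUP_upper) simp
    finally show "ennreal (\<bar>u x\<bar> powr r) \<le> (SUP n. ennreal (\<bar>v n x\<bar> powr r))" .
  qed
  have "Lp_pow r u = (\<integral>\<^sup>+x. (SUP n. ennreal (\<bar>v n x\<bar> powr r)) \<partial>lborel)"
    by (simp add: Lp_pow_def sup)
  also have "\<dots> = (SUP n. Lp_pow r (v n))"
    unfolding Lp_pow_def by (rule nn_integral_monotone_convergence_SUP[OF inc]) measurable
  also have "\<dots> \<le> ennreal ?K" by (intro SUP_least bound)
  finally show ?thesis .
qed




lemma exps: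
  fixes p q s r a D :: real
  assumes p: "p > 1" and s: "0 < s" "s < 1" and sp: "s * p < D"
    and pq: "p < q" and qb: "q < p * (D - s) / (D - s * p)"
    and rdef: "r = p * (q - 1) / (p - 1)"
    and adef: "a = D * (q - p) / ((q - 1) * (D * p - (D - s * p) * q))"
  shows "q > 0" "r > 1" "q < r" "r < p * (s * r + D) / D"
    "0 < 1 - (1 - (p * (s * r + D) / D - r) / (p * (s * r + D) / D - q)) * (s * p / D)"
    "((p * (s * r + D) / D - r) / (p * (s * r + D) / D - q)) / ((1 - (1 - (p * (s * r + D) / D - r) / (p * (s * r + D) / D - q)) * (s * p / D)) * r) = (1 - a) / q"
    "(1 - (p * (s * r + D) / D - r) / (p * (s * r + D) / D - q)) / ((1 - (1 - (p * (s * r + D) / D - r) / (p * (s * r + D) / D - q)) * (s * p / D)) * r) = a / p"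
proof -
  define r1 where "r1 = p * (s * r + D) / D"
  define \<theta> where "\<theta> = (r1 - r) / (r1 - q)"
  define ee where "ee = 1 - (1 - \<theta>) * (s * p / D)"
  have Dpos: "D > 0" using sp s p by (smt (verit) mult_pos_pos)
  have h1: "D - s * p > 0" using sp by simp
  have hq: "q * (D - s * p) < p * (D - s)" using qb h1 by (simp add: less_divide_eq)
  have rp: "r * (p - 1) = p * (q - 1)" using rdef p by simp
  show q0: "q > 0" using pq p by simp
  have rq: "q < r"
  proof -
    have "(r - q) * (p - 1) = q - p" using rp by (simp add: algebra_simps)
    then have "(r - q) * (p - 1) > 0" using pq by simp
    then show ?thesis using p by (simp add: zero_less_mult_iff)
  qed
  then show "q < r" .
  show "r > 1" using rq pq p by simp
  have rr1: "r < r1"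
  proof -
    have a1: "(q - 1) * (D - s * p) < D * (p - 1)" using hq by (simp add: algebra_simps)
    have "r * (D - s * p) * (p - 1) = (r * (p - 1)) * (D - s * p)" by (simp only: mult_ac)
    also have "\<dots> = p * ((q - 1) * (D - s * p))" by (simp only: rp mult.assoc)
    also have "\<dots> < p * (D * (p - 1))" using a1 p by simp
    finally have "r * (D - s * p) * (p - 1) < p * D * (p - 1)" by (simp add: algebra_simps)
    then have "r * (D - s * p) < p * D" using p by simp
    then have "r * D < p * (s * r + D)" by (simp add: algebra_simps)
    then show ?thesis using Dpos by (simp add: r1_def less_divide_eq)
  qed
  then show "r < p * (s * r + D) / D" by (simp add: r1_def)
  define N where "N = p * s * r + p * D - D * q"
  have N: "N = D * (r1 - q)" using Dpos by (simp add: N_def r1_def field_simps)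
  have Npos: "N > 0" using N Dpos rr1 rq by simp
  have omt: "1 - \<theta> = D * (r - q) / N"
  proof -
    have ne: "r1 - q \<noteq> 0" using rr1 rq by simp
    have "1 - \<theta> = ((r1 - q) - (r1 - r)) / (r1 - q)" using ne by (simp add: \<theta>_def field_simps)
    also have "\<dots> = (r - q) / (r1 - q)" by simp
    also have "\<dots> = D * (r - q) / N" using N Dpos by simp
    finally show ?thesis .
  qed
  have Dr1: "D * r1 = p * (s * r + D)" using Dpos by (simp add: r1_def)
  have th: "\<theta> = (p * s * r + p * D - D * r) / N"
  proof -
    have "\<theta> = D * (r1 - r) / (D * (r1 - q))" using Dpos by (simp add: \<theta>_def)
    also have "D * (r1 - r) = p * s * r + p * D - D * r" using Dr1 by (simp add: right_diff_distrib algebra_simps)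
    finally show ?thesis using N by simp
  qed
  have eeN: "ee = (p * D - q * (D - s * p)) / N"
  proof -
    have "ee = 1 - (D * (r - q) / N) * (s * p / D)" by (simp add: ee_def omt)
    also have "\<dots> = (N - s * p * (r - q)) / N" using Npos Dpos by (simp add: field_simps)
    also have "N - s * p * (r - q) = p * D - q * (D - s * p)" by (simp add: N_def algebra_simps)
    finally show ?thesis .
  qed
  have numpos: "p * D - q * (D - s * p) > 0"
  proof -
    have "p * (D - s) < p * D" using p s by simp
    then show ?thesis using hq by simp
  qed
  have eepos: "ee > 0" using eeN numpos Npos by simp
  then show "0 < 1 - (1 - (p * (s * r + D) / D - r) / (p * (s * r + D) / D - q)) * (s * p / D)"
    by (simp add: ee_def \<theta>_def r1_def)
  have I1: "(1 - \<theta>) / (ee * r) = a / p"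
  proof -
    have r0: "r > 0" using rq q0 by simp
    have q1: "q - 1 > 0" using pq p by simp
    define num where "num = p * D - q * (D - s * p)"
    define X where "X = D * (r - q)"
    have "(1 - \<theta>) / (ee * r) = (X / N) / ((num / N) * r)" by (simp add: omt eeN num_def X_def)
    also have "\<dots> = X / (num * r)" using Npos numpos r0 by (simp add: num_def[symmetric] field_simps)
    finally have "(1 - \<theta>) / (ee * r) = D * (r - q) / ((p * D - q * (D - s * p)) * r)"
      by (simp add: num_def X_def)
    also have "r - q = (q - p) / (p - 1)" using rp p by (simp add: field_simps)
    also have "D * ((q - p) / (p - 1)) / ((p * D - q * (D - s * p)) * r) = a / p"
    proof -
      define num where "num = p * D - q * (D - s * p)"
      define Z where "Z = D * (q - p)"
      have nn: "num \<noteq> 0" using numpos by (simp add: num_def)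
      have av: "a = Z / ((q - 1) * num)" by (simp add: adef Z_def num_def algebra_simps)
      have "D * ((q - p) / (p - 1)) / ((p * D - q * (D - s * p)) * r) = (Z / (p - 1)) / (num * (p * (q - 1) / (p - 1)))"
        by (simp add: Z_def num_def rdef)
      also have "\<dots> = (Z / ((q - 1) * num)) / p"
      proof -
        have n1: "p - 1 \<noteq> 0" "q - 1 \<noteq> 0" "p \<noteq> 0" using p q1 by auto
        have "num * (p * (q - 1) / (p - 1)) = (num * p * (q - 1)) / (p - 1)" by simp
        then have "(Z / (p - 1)) / (num * (p * (q - 1) / (p - 1))) = (Z / (p - 1)) / ((num * p * (q - 1)) / (p - 1))"
          by simp
        also have "\<dots> = Z / (num * p * (q - 1))" using n1 by simp
        also have "\<dots> = (Z / ((q - 1) * num)) / p" by (simp add: mult_ac)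
        finally show ?thesis .
      qed
      finally show ?thesis using av by simp
    qed
    finally show ?thesis .
  qed
  have I2: "q * \<theta> + p * (1 - \<theta>) = ee * r"
  proof -
    have "q * \<theta> + p * (1 - \<theta>) = (q * (p * s * r + p * D - D * r) + p * (D * (r - q))) / N"
      unfolding omt using Npos by (simp add: th add_divide_distrib)
    also have "q * (p * s * r + p * D - D * r) + p * (D * (r - q)) = (p * D - q * (D - s * p)) * r"
      by (simp add: algebra_simps)
    also have "\<dots> / N = ee * r" by (simp add: eeN)
    finally show ?thesis .
  qed
  have I3: "\<theta> / (ee * r) = (1 - a) / q"
  proof -
    have r0: "r > 0" using rq q0 by simp
    have "q * (\<theta> / (ee * r)) = (q * \<theta>) / (ee * r)" by simp
    also have "q * \<theta> = ee * r - p * (1 - \<theta>)" using I2 by simp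
    also have "(ee * r - p * (1 - \<theta>)) / (ee * r) = 1 - p * ((1 - \<theta>) / (ee * r))"
      using eepos r0 by (simp add: field_simps)
    also have "\<dots> = 1 - a" using I1 p by simp
    finally show ?thesis using q0 by (simp add: field_simps)
  qed
  show "((p * (s * r + D) / D - r) / (p * (s * r + D) / D - q)) / ((1 - (1 - (p * (s * r + D) / D - r) / (p * (s * r + D) / D - q)) * (s * p / D)) * r) = (1 - a) / q"
    using I3 by (simp add: ee_def \<theta>_def r1_def)
  show "(1 - (p * (s * r + D) / D - r) / (p * (s * r + D) / D - q)) / ((1 - (1 - (p * (s * r + D) / D - r) / (p * (s * r + D) / D - q)) * (s * p / D)) * r) = a / p"
    using I1 by (simp add: ee_def \<theta>_def r1_def)
qed



lemma per_u:
  fixes u :: "'a::euclidean_space \<Rightarrow> real" and p q s r a :: real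
  assumes "p > 1" and "0 < s" and "s < 1" and "s * p < real DIM('a)"
    and "p < q" and "q < p * (real DIM('a) - s) / (real DIM('a) - s * p)"
    and "r = p * (q - 1) / (p - 1)"
    and "a = real DIM('a) * (q - p) / ((q - 1) * (real DIM('a) * p - (real DIM('a) - s * p) * q))"
    and u: "u \<in> Dpqs p q s"
  shows "Lp_pow r u < \<infinity> \<and> Lp_norm r u \<le>
     (2 powr (p * (s * r + real DIM('a)) / real DIM('a)) * unit_ball_vol (real DIM('a)) powr (-1 - s * p / real DIM('a))) powr (a / p)
       * gagliardo s p u powr a * Lp_norm q u powr (1 - a)"
proof -
  define D where "D = real DIM('a)"
  note ex = exps[OF assms(1-8)]
  have um: "u \<in> borel_measurable lborel" and Af: "Lp_pow q u < \<infinity>" and Vf: "gagliardo_pow s p u < \<infinity>"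
    using u by (auto simp: Dpqs_def Wsp_def)
  have GN: "Lp_pow r u \<le> ennreal ((enn2real (Lp_pow q u) powr ((p * (s * r + real DIM('a)) / real DIM('a) - r) / (p * (s * r + real DIM('a)) / real DIM('a) - q))
     * (2 powr (p * (s * r + real DIM('a)) / real DIM('a)) * unit_ball_vol (real DIM('a)) powr (-1 - s * p / real DIM('a)) * enn2real (gagliardo_pow s p u))
         powr (1 - (p * (s * r + real DIM('a)) / real DIM('a) - r) / (p * (s * r + real DIM('a)) / real DIM('a) - q)))
     powr (1 / (1 - (1 - (p * (s * r + real DIM('a)) / real DIM('a) - r) / (p * (s * r + real DIM('a)) / real DIM('a) - q)) * (s * p / real DIM('a)))))"
    by (rule GN_general[OF um assms(1) assms(2) ex(1) ex(2) ex(3) ex(4) ex(5) Af Vf])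
  define r1 where "r1 = p * (s * r + D) / D"
  define \<theta> where "\<theta> = (r1 - r) / (r1 - q)"
  define ee where "ee = 1 - (1 - \<theta>) * (s * p / D)"
  define Cc where "Cc = 2 powr r1 * unit_ball_vol D powr (-1 - s * p / D)"
  define A where "A = enn2real (Lp_pow q u)"
  define V where "V = enn2real (gagliardo_pow s p u)"
  define K where "K = (A powr \<theta> * (Cc * V) powr (1 - \<theta>)) powr (1 / ee)"
  have GN': "Lp_pow r u \<le> ennreal K"
    using GN unfolding K_def A_def V_def Cc_def ee_def \<theta>_def r1_def D_def .
  have I3: "\<theta> / (ee * r) = (1 - a) / q" and I1: "(1 - \<theta>) / (ee * r) = a / p"
    using ex(6,7) unfolding ee_def \<theta>_def r1_def D_def .
  have eep: "ee > 0" using ex(5) unfolding ee_def \<theta>_def r1_def D_def .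
  have r0: "r > 0" using ex(2) by simp
  have A0: "A \<ge> 0" and V0: "V \<ge> 0" by (simp_all add: A_def V_def)
  have Cc0: "Cc > 0"
  proof -
    have uv: "unit_ball_vol D > 0" by (simp add: D_def)
    then have uv': "unit_ball_vol D \<noteq> 0" by linarith
    show ?thesis unfolding Cc_def by (intro mult_pos_pos powr_gt_zero[THEN iffD2]) (use uv' in auto)
  qed
  have K0: "K \<ge> 0" by (simp add: K_def)
  have fin: "Lp_pow r u < \<infinity>" using GN' by (simp add: le_less_trans)
  have "enn2real (Lp_pow r u) \<le> enn2real (ennreal K)" using GN' by (rule enn2real_mono) simp
  then have "enn2real (Lp_pow r u) \<le> K" using K0 by simp
  then have "Lp_norm r u \<le> K powr (1 / r)"
    unfolding Lp_norm_def using r0 by (intro powr_mono2) auto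
  also have "K powr (1 / r) = A powr (\<theta> / (ee * r)) * Cc powr ((1 - \<theta>) / (ee * r)) * V powr ((1 - \<theta>) / (ee * r))"
  proof -
    have "K powr (1 / r) = (A powr \<theta> * (Cc * V) powr (1 - \<theta>)) powr (1 / ee * (1 / r))"
      by (simp only: K_def powr_powr)
    also have "\<dots> = (A powr \<theta>) powr (1 / ee * (1 / r)) * ((Cc * V) powr (1 - \<theta>)) powr (1 / ee * (1 / r))"
      by (rule powr_mult)
    also have "\<dots> = A powr (\<theta> / (ee * r)) * (Cc * V) powr ((1 - \<theta>) / (ee * r))"
      by (simp only: powr_powr) simp
    also have "(Cc * V) powr ((1 - \<theta>) / (ee * r)) = Cc powr ((1 - \<theta>) / (ee * r)) * V powr ((1 - \<theta>) / (ee * r))"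
      using Cc0 V0 by (simp add: powr_mult)
    finally show ?thesis by (simp only: mult.assoc)
  qed
  also have "\<dots> = Cc powr (a / p) * (V powr (1 / p)) powr a * (A powr (1 / q)) powr (1 - a)"
  proof -
    have "A powr (\<theta> / (ee * r)) = (A powr (1 / q)) powr (1 - a)" by (simp add: powr_powr I3)
    moreover have "V powr ((1 - \<theta>) / (ee * r)) = (V powr (1 / p)) powr a" by (simp add: powr_powr I1)
    moreover have "Cc powr ((1 - \<theta>) / (ee * r)) = Cc powr (a / p)" by (simp add: I1)
    ultimately show ?thesis by (simp only: mult_ac)
  qed
  also have "\<dots> = Cc powr (a / p) * gagliardo s p u powr a * Lp_norm q u powr (1 - a)"
    by (simp only: gagliardo_def Lp_norm_def A_def V_def)
  finally show ?thesis using fin by (simp add: Cc_def r1_def D_def)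
qed



lemma bump_in_Dpqs:
  assumes p: "p > 1" and s: "0 < s" "s < 1" and q: "q > 0"
  shows "(bump :: 'a::euclidean_space \<Rightarrow> real) \<in> Dpqs p q s"
proof -
  have m: "(bump :: 'a \<Rightarrow> real) \<in> borel_measurable lborel" by simp
  have z1: "Lp_pow p (\<lambda>x::'a. bump x - bump x) = 0" using p by (simp add: Lp_pow_def)
  have z2: "gagliardo_pow s p (\<lambda>x::'a. bump x - bump x) = 0" using p by (simp add: gagliardo_pow_def)
  have W: "(bump :: 'a \<Rightarrow> real) \<in> Wsp s p"
    unfolding Wsp_def
    using m bump_Lp_finite[of p] p bump_gagliardo_finite[OF p s] bump_smooth z1 z2
    by (auto intro!: exI[of _ "\<lambda>n. bump"])
  show ?thesis unfolding Dpqs_def using W bump_Lp_finite[OF q] bump_not_AE0 by auto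
qed

theorem theorem1p4:
  fixes p q s r a :: real
  assumes "p > 1" and "0 < s" and "s < 1" and "s * p < real DIM('a::euclidean_space)"
    and "p < q" and "q < p * (real DIM('a) - s) / (real DIM('a) - s * p)"
    and "r = p * (q - 1) / (p - 1)"
    and "a = real DIM('a) * (q - p) / ((q - 1) * (real DIM('a) * p - (real DIM('a) - s * p) * q))"
  shows "\<exists>L::real. 0 < L \<and>
    (\<forall>u \<in> (Dpqs p q s :: ('a \<Rightarrow> real) set). Lp_pow r u < \<infinity> \<and>
        Lp_norm r u \<le> L * gagliardo s p u powr a * Lp_norm q u powr (1 - a)) \<and>
    (\<forall>L'. (\<forall>u \<in> (Dpqs p q s :: ('a \<Rightarrow> real) set).
        Lp_norm r u \<le> L' * gagliardo s p u powr a * Lp_norm q u powr (1 - a)) \<longrightarrow> L \<le> L')"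
proof -
  define L0 where "L0 = (2 powr (p * (s * r + real DIM('a)) / real DIM('a)) * unit_ball_vol (real DIM('a)) powr (-1 - s * p / real DIM('a))) powr (a / p)"
  define DS where "DS = (Dpqs p q s :: ('a \<Rightarrow> real) set)"
  define den where "den u = gagliardo s p u powr a * Lp_norm q u powr (1 - a)" for u :: "'a \<Rightarrow> real"
  define R where "R u = Lp_norm r u / den u" for u :: "'a \<Rightarrow> real"
  note ex = exps[OF assms]
  have r0: "r > 0" using ex(2) by simp
  have q0: "q > 0" using ex(1) .
  have PU: "Lp_pow r u < \<infinity> \<and> Lp_norm r u \<le> L0 * den u" if "u \<in> DS" for u
    using per_u[OF assms, of u] that by (simp add: DS_def L0_def den_def mult.assoc)
  have posnorm: "Lp_norm r u > 0" if u: "u \<in> DS" for u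
  proof -
    have um[measurable]: "u \<in> borel_measurable lborel" using u by (auto simp: DS_def Dpqs_def Wsp_def)
    have nz: "\<not> (AE x in lborel. u x = 0)" using u by (auto simp: DS_def Dpqs_def)
    have fin: "Lp_pow r u < \<infinity>" using PU[OF u] by simp
    have "Lp_pow r u \<noteq> 0"
    proof
      assume "Lp_pow r u = 0"
      then have "AE x in lborel. ennreal (\<bar>u x\<bar> powr r) = 0"
        unfolding Lp_pow_def by (subst (asm) nn_integral_0_iff_AE) auto
      then have "AE x in lborel. u x = 0" by eventually_elim simp
      with nz show False by simp
    qed
    then have "enn2real (Lp_pow r u) > 0" using fin
      by (simp add: enn2real_positive_iff less_top zero_less_iff_neq_zero)
    then show ?thesis by (simp add: Lp_norm_def)
  qed
  have posden: "den u > 0" if u: "u \<in> DS" for u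
  proof -
    have "den u \<ge> 0" by (simp add: den_def)
    moreover have "den u \<noteq> 0"
    proof
      assume "den u = 0"
      then have "Lp_norm r u \<le> 0" using PU[OF u] by simp
      with posnorm[OF u] show False by simp
    qed
    ultimately show ?thesis by simp
  qed
  have Rb: "R u \<le> L0" if u: "u \<in> DS" for u
    using PU[OF u] posden[OF u] by (simp add: R_def pos_divide_le_eq)
  have bDS: "bump \<in> DS" unfolding DS_def by (rule bump_in_Dpqs[OF assms(1-3) q0])
  have ne: "R ` DS \<noteq> {}" using bDS by auto
  have bdd: "bdd_above (R ` DS)" using Rb by (auto intro!: bdd_aboveI[of _ L0])
  define L where "L = Sup (R ` DS)"
  have RL: "R u \<le> L" if "u \<in> DS" for u unfolding L_def using bdd that by (intro cSup_upper) auto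
  have Rpos: "R bump > 0" using posnorm[OF bDS] posden[OF bDS] by (simp add: R_def)
  show ?thesis
  proof (intro exI[of _ L] conjI ballI allI impI)
    show "0 < L" using RL[OF bDS] Rpos by simp
  next
    fix u assume u: "u \<in> (Dpqs p q s :: ('a \<Rightarrow> real) set)"
    then have u': "u \<in> DS" by (simp add: DS_def)
    show "Lp_pow r u < \<infinity>" using PU[OF u'] by simp
    have "R u \<le> L" using RL[OF u'] .
    then have "Lp_norm r u \<le> L * den u" using posden[OF u'] by (simp add: R_def pos_divide_le_eq)
    then show "Lp_norm r u \<le> L * gagliardo s p u powr a * Lp_norm q u powr (1 - a)"
      by (simp add: den_def mult.assoc)
  next
    fix L' assume H: "\<forall>u \<in> (Dpqs p q s :: ('a \<Rightarrow> real) set). Lp_norm r u \<le> L' * gagliardo s p u powr a * Lp_norm q u powr (1 - a)"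
    have "R u \<le> L'" if u: "u \<in> DS" for u
    proof -
      have "Lp_norm r u \<le> L' * den u" using H u by (simp add: DS_def den_def mult.assoc)
      then show ?thesis using posden[OF u] by (simp add: R_def pos_divide_le_eq)
    qed
    then show "L \<le> L'" unfolding L_def using ne by (intro cSup_least) auto
  qed
qed



end
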